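(* Let $\theta(q,x):=\sum_{j=0}^{\infty}q^{j(j+1)/2}x^j$. For every fixed $q\in(0,1)$, the function $x\mapsto\theta(q,x)$ has no real zeros $x\geq -5$.
   Context: For $q\in(0,1)$ the series defining $\theta(q,x)$ converges for all $x\in\mathbb{C}$. *)

theory Defs
  imports "HOL-Analysis.Analysis"
begin

text \<open>Partial theta function theta(q,x) = sum over j of q^(j(j+1)/2) x^j (real arguments).
  The exponent j(j+1)/2 is a natural number, so nat division is exact.\<close>
definition theta :: "real \<Rightarrow> real \<Rightarrow> real" where
  "theta q x = (\<Sum>j. q ^ (j * (j + 1) div 2) * x ^ j)"

end

theory Submission
  imports Defs
begin

definition tri :: "nat \<Rightarrow> nat" where "tri j = j * (j + 1) div 2"

lemma tri_Suc: "tri (Suc j) = tri j + Suc j"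
proof -
  have "Suc j * (Suc j + 1) = j * (j + 1) + 2 * Suc j" by (simp add: algebra_simps)
  then show ?thesis unfolding tri_def by simp
qed
lemma tri_0 [simp]: "tri 0 = 0" by (simp add: tri_def)
lemma theta_def': "theta q x = (\<Sum>j. q ^ tri j * x ^ j)"
  by (simp add: theta_def tri_def)

lemma summable_theta_norm:
  fixes q x :: real
  assumes q: "0 < q" "q < 1"
  shows "summable (\<lambda>j. norm (q ^ tri j * x ^ j))"
proof -
  have "\<exists>N. q ^ N < 1 / (2 * (\<bar>x\<bar> + 1))"
    by (rule real_arch_pow_inv) (use q in auto)
  then obtain N where N: "q ^ N < 1 / (2 * (\<bar>x\<bar> + 1))" by blast
  show ?thesis
  proof (rule summable_ratio_test[of "1/2" N])
    fix n assume n: "N \<le> n"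
    have h: "q ^ Suc n \<le> q ^ N" using q n by (intro power_decreasing) auto
    have "q ^ Suc n * \<bar>x\<bar> \<le> q ^ Suc n * (\<bar>x\<bar> + 1)" using q by (simp add: mult_left_mono)
    also have "\<dots> \<le> (1 / (2 * (\<bar>x\<bar> + 1))) * (\<bar>x\<bar> + 1)"
      using h N by (intro mult_right_mono) auto
    also have "\<dots> = 1/2" by (simp add: field_simps)
    finally have qs: "q ^ Suc n * \<bar>x\<bar> \<le> 1/2" .
    have "norm (norm (q ^ tri (Suc n) * x ^ Suc n)) = (q ^ Suc n * \<bar>x\<bar>) * norm (q ^ tri n * x ^ n)"
      using q unfolding tri_Suc power_add by (simp add: abs_mult power_abs)
    also have "\<dots> \<le> 1/2 * norm (q ^ tri n * x ^ n)"
      by (intro mult_right_mono qs) auto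
    finally show "norm (norm (q ^ tri (Suc n) * x ^ Suc n)) \<le> 1/2 * norm (norm (q ^ tri n * x ^ n))" by simp
  qed simp
qed

lemma summable_theta:
  fixes q x :: real
  assumes "0 < q" "q < 1"
  shows "summable (\<lambda>j. q ^ tri j * x ^ j)"
  by (rule summable_norm_cancel[OF summable_theta_norm[OF assms]])

lemma theta_ge_1:
  fixes q x :: real
  assumes q: "0 < q" "q < 1" and x: "0 \<le> x"
  shows "theta q x \<ge> 1"
proof -
  have "(\<Sum>i<1. q ^ tri i * x ^ i) \<le> (\<Sum>j. q ^ tri j * x ^ j)"
    by (rule sum_le_suminf[OF summable_theta[OF q]]) (use q x in auto)
  then show ?thesis by (simp add: theta_def')
qed

lemma theta_alt:
  fixes q y :: real
  assumes q: "0 < q" "q < 1" and y: "0 \<le> y" "q * y \<le> 1"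
  shows "theta q (-y) \<ge> 1 - q * y"
    and "theta q (-y) \<ge> 1 - q * y + q^3 * y^2 - q^6 * y^3"
proof -
  define a where "a j = q ^ tri j * y ^ j" for j
  have th: "theta q (-y) = (\<Sum>j. (-1)^j * a j)"
    unfolding theta_def' a_def by (intro arg_cong[where f=suminf] ext) (subst power_minus, simp add: mult.left_commute)
  have a0: "0 \<le> a j" for j using q y by (simp add: a_def)
  have amono: "a (Suc j) \<le> a j" for j
  proof -
    have "q ^ j \<le> 1" using q by (simp add: power_le_one)
    then have "q ^ Suc j \<le> q" using q by (simp add: mult_left_le)
    then have "q ^ Suc j * y \<le> q * y" using y by (intro mult_right_mono) auto
    then have "q ^ Suc j * y \<le> 1" using y by linarith
    then have "a j * (q ^ Suc j * y) \<le> a j * 1" using a0 by (intro mult_left_mono) auto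
    moreover have "a (Suc j) = a j * (q ^ Suc j * y)"
      unfolding a_def tri_Suc power_add by simp
    ultimately show ?thesis by simp
  qed
  have "a \<longlonglongrightarrow> 0" unfolding a_def by (rule summable_LIMSEQ_zero[OF summable_theta[OF q]])
  note L = summable_Leibniz'[OF this a0 amono]
  have t1: "tri 1 = 1" "tri (Suc 0) = 1" "tri 2 = 3" "tri 3 = 6" by (simp_all add: tri_def)
  have "(\<Sum>i<2*1. (-1)^i * a i) \<le> theta q (-y)" unfolding th by (rule L(2))
  also have "(\<Sum>i<2*1. (-1)^i * a i) = 1 - q * y" 
    by (simp add: a_def numeral_2_eq_2 tri_def)
  finally show "theta q (-y) \<ge> 1 - q * y" .
  have "(\<Sum>i<2*2. (-1)^i * a i) \<le> theta q (-y)" unfolding th by (rule L(2))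
  also have "(\<Sum>i<2*2. (-1)^i * a i) = 1 - q * y + q^3 * y^2 - q^6 * y^3"
  proof -
    have "(\<Sum>i<2*2. (-1)^i * a i) = a 0 - a 1 + a 2 - a 3" by (simp add: eval_nat_numeral)
    then show ?thesis by (simp add: a_def t1)
  qed
  finally show "theta q (-y) \<ge> 1 - q * y + q^3 * y^2 - q^6 * y^3" .
qed

lemma tri2: "2 * tri n = n * (n + 1)"
  by (induction n) (simp_all add: tri_Suc algebra_simps)

section \<open>q-Pochhammer and Gaussian binomials\<close>

definition qp :: "real \<Rightarrow> nat \<Rightarrow> real" where "qp q n = (\<Prod>i<n. 1 - q ^ Suc i)"

lemma qp_0 [simp]: "qp q 0 = 1" by (simp add: qp_def)
lemma qp_Suc: "qp q (Suc n) = qp q n * (1 - q ^ Suc n)" by (simp add: qp_def)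

lemma qp_pos: assumes "0 < q" "q < 1" shows "0 < qp q n"
proof (induction n)
  case (Suc n)
  have "q ^ Suc n < 1" using assms by (rule power_Suc_less_one)
  then show ?case using Suc by (simp add: qp_Suc)
qed simp

lemma qp_antimono: assumes "0 < q" "q < 1" "m \<le> n" shows "qp q n \<le> qp q m"
  using assms(3)
proof (induction n rule: dec_induct)
  case (step n)
  have "0 \<le> q ^ Suc n" using assms by simp
  then have "qp q n * (1 - q ^ Suc n) \<le> qp q n" using qp_pos[OF assms(1,2), of n] by (simp add: mult_left_le)
  then show ?case using step by (simp add: qp_Suc)
qed simp

fun qbin :: "real \<Rightarrow> nat \<Rightarrow> nat \<Rightarrow> real" where
  "qbin q N 0 = 1"
| "qbin q 0 (Suc j) = 0"
| "qbin q (Suc N) (Suc j) = qbin q N (Suc j) + q ^ (N - j) * qbin q N j"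

lemma qbin_zero: "N < j \<Longrightarrow> qbin q N j = 0"
proof (induction N arbitrary: j)
  case 0 then show ?case by (cases j) auto
next
  case (Suc N)
  then obtain k where k: "j = Suc k" "N < k" by (cases j) auto
  then show ?case using Suc by simp
qed

lemma qbin_closed: "j \<le> N \<Longrightarrow> qbin q N j * qp q j * qp q (N - j) = qp q N"
proof (induction N arbitrary: j)
  case 0 then show ?case by simp
next
  case (Suc N)
  show ?case
  proof (cases j)
    case 0 then show ?thesis by simp
  next
    case (Suc k)
    with Suc.prems have kN: "k \<le> N" by simp
    show ?thesis
    proof (cases "k = N")
      case True
      have h: "qbin q N N * qp q N = qp q N" using Suc.IH[of N] by simp
      have "qbin q (Suc N) j * qp q j * qp q (Suc N - j) = qbin q N N * qp q (Suc N)"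
        using True Suc by (simp add: qbin_zero)
      also have "\<dots> = (qbin q N N * qp q N) * (1 - q ^ Suc N)" by (simp add: qp_Suc)
      also have "\<dots> = qp q (Suc N)" unfolding h by (simp add: qp_Suc)
      finally show ?thesis .
    next
      case False
      then have kN': "Suc k \<le> N" using kN by simp
      have e1: "qp q (N - k) = qp q (N - Suc k) * (1 - q ^ (N - k))"
        using kN' by (metis Suc_diff_Suc Suc_le_lessD qp_Suc)
      have IH1: "qbin q N (Suc k) * qp q (Suc k) * qp q (N - Suc k) = qp q N" using Suc.IH[OF kN'] .
      have IH2: "qbin q N k * qp q k * qp q (N - k) = qp q N" using Suc.IH[OF kN] .
      have ex: "q ^ (N - k) * q ^ Suc k = q ^ Suc N" using kN by (simp add: power_add[symmetric])
      have "qbin q (Suc N) j * qp q j * qp q (Suc N - j)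
          = (qbin q N (Suc k) + q ^ (N - k) * qbin q N k) * qp q (Suc k) * qp q (N - k)"
        using Suc by simp
      also have "\<dots> = (qbin q N (Suc k) * qp q (Suc k) * qp q (N - Suc k)) * (1 - q ^ (N - k))
                 + q ^ (N - k) * (qbin q N k * qp q k * qp q (N - k)) * (1 - q ^ Suc k)"
        unfolding e1 qp_Suc by (simp add: algebra_simps)
      also have "\<dots> = qp q N * (1 - q ^ (N - k) * q ^ Suc k)"
        unfolding IH1 IH2 by (simp add: algebra_simps)
      also have "\<dots> = qp q (Suc N)" unfolding ex qp_Suc ..
      finally show ?thesis .
    qed
  qed
qed

lemma qbin_eq: assumes "0 < q" "q < 1" "j \<le> N"
  shows "qbin q N j = qp q N / (qp q j * qp q (N - j))"
proof -
  have nz: "qp q j * qp q (N - j) \<noteq> 0" using qp_pos[OF assms(1,2)] by (simp add: less_imp_neq[symmetric])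
  have "qbin q N j * (qp q j * qp q (N - j)) = qp q N" using qbin_closed[OF assms(3), of q] by (simp add: mult.assoc)
  then show ?thesis using nz by (simp add: eq_divide_eq)
qed

lemma qbin_sym: assumes "0 < q" "q < 1" "j \<le> N"
  shows "qbin q N (N - j) = qbin q N j"
  using assms by (simp add: qbin_eq mult.commute)

lemma qbin_binomial:
  fixes q w :: real
  shows "(\<Prod>i<N. 1 + w * q ^ Suc i) = (\<Sum>j\<le>N. qbin q N j * q ^ tri j * w ^ j)"
proof (induction N)
  case 0 then show ?case by simp
next
  case (Suc N)
  have A: "(\<Sum>j\<le>Suc N. qbin q (Suc N) j * q ^ tri j * w ^ j)
      = 1 + (\<Sum>j\<le>N. qbin q N (Suc j) * q ^ tri (Suc j) * w ^ Suc j)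
          + (\<Sum>j\<le>N. q ^ (N - j) * qbin q N j * q ^ tri (Suc j) * w ^ Suc j)"
    by (subst sum.atMost_Suc_shift) (simp add: sum.distrib algebra_simps)
  have B: "(\<Sum>j\<le>N. q ^ (N - j) * qbin q N j * q ^ tri (Suc j) * w ^ Suc j)
      = (\<Sum>j\<le>N. qbin q N j * q ^ tri j * w ^ j) * (w * q ^ Suc N)"
    unfolding sum_distrib_right
  proof (rule sum.cong[OF refl])
    fix j assume "j \<in> {..N}"
    then have "N - j + tri (Suc j) = tri j + Suc N" by (simp add: tri_Suc)
    then have "q ^ (N - j) * q ^ tri (Suc j) = q ^ tri j * q ^ Suc N" by (metis power_add)
    then show "q ^ (N - j) * qbin q N j * q ^ tri (Suc j) * w ^ Suc j
        = qbin q N j * q ^ tri j * w ^ j * (w * q ^ Suc N)"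
      by (simp add: algebra_simps)
  qed
  have C: "(\<Sum>j\<le>N. qbin q N j * q ^ tri j * w ^ j)
      = 1 + (\<Sum>j\<le>N. qbin q N (Suc j) * q ^ tri (Suc j) * w ^ Suc j)"
  proof -
    have z: "qbin q N (Suc N) = 0" by (simp add: qbin_zero)
    have "(\<Sum>j\<le>Suc N. qbin q N j * q ^ tri j * w ^ j) = (\<Sum>j\<le>N. qbin q N j * q ^ tri j * w ^ j)"
      by (simp add: z)
    moreover have "(\<Sum>j\<le>Suc N. qbin q N j * q ^ tri j * w ^ j)
       = 1 + (\<Sum>j\<le>N. qbin q N (Suc j) * q ^ tri (Suc j) * w ^ Suc j)"
      by (subst sum.atMost_Suc_shift) simp
    ultimately show ?thesis by (simp add: z)
  qed
  show ?case
    unfolding A B prod.lessThan_Suc Suc.IH using C by (simp add: algebra_simps)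
qed


lemma prod_split2: "(\<Prod>i<n+m. f i) = (\<Prod>i<n. f i) * (\<Prod>i<m. f (n+i))"
  for f :: "nat \<Rightarrow> real"
  by (induction m) (simp_all add: algebra_simps)

lemma sum_split_le: "(\<Sum>j\<le>n+m. F j) = (\<Sum>j<n. F j) + (\<Sum>k\<le>m. F (n+k))"
  for F :: "nat \<Rightarrow> real"
proof (induction m)
  case 0 then show ?case by (simp add: lessThan_Suc_atMost[symmetric])
next
  case (Suc m) then show ?case by (simp add: algebra_simps)
qed

lemma sum_i_tri: "(\<Sum>i<n. i) + n = tri n"
  by (induction n) (simp_all add: tri_Suc)

lemma expo1: "(\<Sum>i<n. i) + tri (n+k) = tri k + n * (n + k)"
proof -
  have a: "2 * tri n = n * (n + 1)" "2 * tri (n+k) = (n+k) * (n+k+1)" "2 * tri k = k * (k+1)"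
    by (rule tri2)+
  have b: "(\<Sum>i<n. i) + n = tri n" by (rule sum_i_tri)
  have "2 * ((\<Sum>i<n. i) + tri (n+k)) = 2 * (tri k + n * (n + k))"
    using a b by (simp add: algebra_simps)
  then show ?thesis by simp
qed

lemma expo2: "n = j + Suc i \<Longrightarrow> (\<Sum>i<n. i) + tri j = tri i + n * j"
proof -
  assume n: "n = j + Suc i"
  have a: "2 * tri n = n * (n + 1)" "2 * tri j = j * (j+1)" "2 * tri i = i * (i+1)"
    by (rule tri2)+
  have b: "(\<Sum>i<n. i) + n = tri n" by (rule sum_i_tri)
  have "2 * ((\<Sum>i<n. i) + tri j) = 2 * (tri i + n * j)"
    using a b n by (simp add: algebra_simps)
  then show ?thesis by simp
qed


lemma term1:
  fixes q x :: real
  assumes "q \<noteq> 0" "x \<noteq> 0"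
  shows "q ^ tri (n+k) * (x / q^n) ^ (n+k) * (q ^ (\<Sum>i<n. i) / x ^ n) = q ^ tri k * x ^ k"
proof -
  have e: "q ^ tri (n+k) * q ^ (\<Sum>i<n. i) = q ^ tri k * q ^ (n * (n+k))"
    using expo1[of n k] by (metis add.commute power_add)
  have "q ^ tri (n+k) * (x / q^n) ^ (n+k) * (q ^ (\<Sum>i<n. i) / x ^ n)
      = (q ^ tri (n+k) * q ^ (\<Sum>i<n. i)) * x ^ (n+k) / (q ^ (n * (n+k)) * x ^ n)"
    by (simp add: power_divide power_mult)
  also have "\<dots> = q ^ tri k * x ^ k" unfolding e using assms by (simp add: power_add)
  finally show ?thesis .
qed

lemma term2:
  fixes q x :: real
  assumes "q \<noteq> 0" "x \<noteq> 0" "n = j + Suc i"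
  shows "q ^ tri j * (x / q^n) ^ j * (q ^ (\<Sum>i<n. i) / x ^ n) = q ^ tri i * (1/x) ^ Suc i"
proof -
  have e: "q ^ tri j * q ^ (\<Sum>i<n. i) = q ^ tri i * q ^ (n * j)"
    using expo2[OF assms(3)] by (metis add.commute power_add)
  have "q ^ tri j * (x / q^n) ^ j * (q ^ (\<Sum>i<n. i) / x ^ n)
      = (q ^ tri j * q ^ (\<Sum>i<n. i)) * x ^ j / (q ^ (n * j) * x ^ n)"
    by (simp add: power_divide power_mult)
  also have "\<dots> = q ^ tri i * (1/x) ^ Suc i" unfolding e using assms
    by (simp add: power_add power_one_over field_simps)
  finally show ?thesis .
qed

lemma jtp_finite:
  fixes q x :: real
  assumes q: "0 < q" "q < 1" and x: "x \<noteq> 0"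
  shows "(\<Prod>i<n. (1 + q^i/x) * (1 + x * q^Suc i))
    = (\<Sum>k\<le>n. qbin q (2*n) (n+k) * q ^ tri k * x ^ k)
    + (\<Sum>i<n. qbin q (2*n) (n + Suc i) * q ^ tri i * (1/x) ^ Suc i)"
proof -
  define w where "w = x / q^n"
  define f where "f i = 1 + w * q ^ Suc i" for i
  define F where "F j = qbin q (2*n) j * q ^ tri j * w ^ j" for j
  define C where "C = q ^ (\<Sum>i<n. i) / x ^ n"
  have q0: "q \<noteq> 0" using q by simp
  have qn: "q ^ n \<noteq> 0" using q by simp
  have bin: "(\<Prod>i<n+n. f i) = (\<Sum>j\<le>n+n. F j)"
    unfolding f_def F_def mult_2 by (rule qbin_binomial)
  have P2: "(\<Prod>i<n. f (n+i)) = (\<Prod>i<n. 1 + x * q ^ Suc i)"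
  proof (rule prod.cong[OF refl])
    fix i
    have "w * q ^ Suc (n + i) = x * q ^ Suc i" unfolding w_def using qn by (simp add: power_add)
    then show "f (n+i) = 1 + x * q ^ Suc i" by (simp add: f_def)
  qed
  have C_eq: "C = (\<Prod>i<n. q ^ i / x)"
    unfolding C_def by (simp add: prod_dividef power_sum)
  have P1: "(\<Prod>i<n. f i) * C = (\<Prod>i<n. 1 + q ^ i / x)"
  proof -
    have "(\<Prod>i<n. f i) = (\<Prod>i<n. f (n - Suc i))" by (rule prod.nat_diff_reindex[symmetric])
    also have "\<dots> = (\<Prod>i<n. 1 + x / q ^ i)"
    proof (rule prod.cong[OF refl])
      fix i assume "i \<in> {..<n}"
      then have "n = i + Suc (n - Suc i)" by simp
      then have "q ^ n = q ^ i * q ^ Suc (n - Suc i)" by (metis power_add)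
      then have "w * q ^ Suc (n - Suc i) = x / q ^ i" unfolding w_def using q0 qn
        by (simp add: field_simps)
      then show "f (n - Suc i) = 1 + x / q ^ i" by (simp add: f_def)
    qed
    finally have A: "(\<Prod>i<n. f i) = (\<Prod>i<n. 1 + x / q ^ i)" .
    have "(\<Prod>i<n. f i) * C = (\<Prod>i<n. (1 + x / q ^ i) * (q ^ i / x))"
      unfolding A C_eq by (rule prod.distrib[symmetric])
    also have "\<dots> = (\<Prod>i<n. 1 + q ^ i / x)"
      using q0 x by (intro prod.cong[OF refl]) (simp add: field_simps)
    finally show ?thesis .
  qed
  have LHS: "(\<Prod>i<n. (1 + q^i/x) * (1 + x * q^Suc i)) = (\<Prod>i<n+n. f i) * C"
    unfolding prod_split2 prod.distrib P2[symmetric] P1[symmetric] by (simp add: algebra_simps)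
  have R1: "F (n+k) * C = qbin q (2*n) (n+k) * q ^ tri k * x ^ k" for k
  proof -
    have "F (n+k) * C = qbin q (2*n) (n+k) * (q ^ tri (n+k) * (x / q^n) ^ (n+k) * (q ^ (\<Sum>i<n. i) / x ^ n))"
      unfolding F_def C_def w_def by (simp only: mult.assoc)
    also have "\<dots> = qbin q (2*n) (n+k) * (q ^ tri k * x ^ k)" by (simp only: term1[OF q0 x])
    finally show ?thesis by (simp only: mult.assoc)
  qed
  have R2: "F (n - Suc i) * C = qbin q (2*n) (n + Suc i) * q ^ tri i * (1/x) ^ Suc i" if "i < n" for i
  proof -
    have "qbin q (2*n) (2*n - (n + Suc i)) = qbin q (2*n) (n + Suc i)"
      using that q by (intro qbin_sym) auto
    moreover have "2*n - (n + Suc i) = n - Suc i" by simp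
    ultimately have s: "qbin q (2*n) (n - Suc i) = qbin q (2*n) (n + Suc i)" by simp
    have nn: "n = (n - Suc i) + Suc i" using that by simp
    have "F (n - Suc i) * C = qbin q (2*n) (n + Suc i) * (q ^ tri (n - Suc i) * (x / q^n) ^ (n - Suc i) * (q ^ (\<Sum>i<n. i) / x ^ n))"
      unfolding F_def C_def w_def s by (simp only: mult.assoc)
    also have "\<dots> = qbin q (2*n) (n + Suc i) * (q ^ tri i * (1/x) ^ Suc i)" by (simp only: term2[OF q0 x nn])
    finally show ?thesis by (simp only: mult.assoc)
  qed
  have "(\<Sum>j\<le>n+n. F j) * C = (\<Sum>j<n. F j * C) + (\<Sum>k\<le>n. F (n+k) * C)"
    unfolding sum_split_le distrib_right sum_distrib_right ..
  also have "(\<Sum>j<n. F j * C) = (\<Sum>i<n. F (n - Suc i) * C)"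
    by (rule sum.nat_diff_reindex[symmetric])
  also have "\<dots> = (\<Sum>i<n. qbin q (2*n) (n + Suc i) * q ^ tri i * (1/x) ^ Suc i)"
    by (intro sum.cong[OF refl] R2) simp
  also have "(\<Sum>k\<le>n. F (n+k) * C) = (\<Sum>k\<le>n. qbin q (2*n) (n+k) * q ^ tri k * x ^ k)"
    by (intro sum.cong[OF refl] R1)
  finally show ?thesis unfolding LHS bin by simp
qed


lemma qp_limit:
  fixes q :: real
  assumes q: "0 < q" "q < 1"
  shows "\<exists>L. qp q \<longlonglongrightarrow> L \<and> 0 < L \<and> (\<forall>n. L \<le> qp q n)"
proof -
  define f where "f i = 1 - q ^ Suc i" for i
  have fnz: "f i \<noteq> 0" for i
    using power_Suc_less_one[OF q, of i] by (simp add: f_def)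
  have "summable (\<lambda>i. q * q ^ i)" using q by (intro summable_mult summable_geometric) simp
  then have "summable (\<lambda>i. norm (f i - 1))" using q by (simp add: f_def)
  then have "convergent_prod f"
    by (intro abs_convergent_prod_imp_convergent_prod summable_imp_abs_convergent_prod)
  then obtain L where L: "(\<lambda>n. \<Prod>i\<le>n. f i) \<longlonglongrightarrow> L" "L \<noteq> 0"
    using convergent_prod_iff_nz_lim[of f] fnz by blast
  have "(\<lambda>n. qp q (Suc n)) \<longlonglongrightarrow> L"
    using L(1) unfolding qp_def f_def lessThan_Suc_atMost .
  then have lim: "qp q \<longlonglongrightarrow> L" by (rule LIMSEQ_imp_Suc)
  have dec: "decseq (qp q)" unfolding decseq_def using qp_antimono[OF q] by blast
  have le: "L \<le> qp q n" for n by (rule decseq_ge[OF dec lim])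
  have "0 \<le> L" by (rule LIMSEQ_le_const[OF lim]) (use qp_pos[OF q] less_imp_le in blast)
  with L(2) have "0 < L" by simp
  with lim le show ?thesis by blast
qed

lemma W_lim:
  fixes q L :: real
  assumes q: "0 < q" "q < 1" and lim: "qp q \<longlonglongrightarrow> L" and L: "0 < L"
  shows "(\<lambda>n. L^2 / qp q (2*n) * qbin q (2*n) (n+k)) \<longlonglongrightarrow> 1"
proof -
  have l1: "(\<lambda>n. qp q (n + k)) \<longlonglongrightarrow> L" by (rule LIMSEQ_ignore_initial_segment[OF lim])
  have l2: "(\<lambda>n. qp q (n - k)) \<longlonglongrightarrow> L"
    by (rule filterlim_compose[OF lim filterlim_minus_const_nat_at_top])
  have "(\<lambda>n. L^2 / (qp q (n + k) * qp q (n - k))) \<longlonglongrightarrow> L^2 / (L * L)"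
    using L by (intro tendsto_intros l1 l2) auto
  then have l3: "(\<lambda>n. L^2 / (qp q (n + k) * qp q (n - k))) \<longlonglongrightarrow> 1"
    using L by (simp add: power2_eq_square)
  show ?thesis
  proof (rule Lim_transform_eventually[OF l3])
    show "\<forall>\<^sub>F n in sequentially. L\<^sup>2 / (qp q (n + k) * qp q (n - k)) = L\<^sup>2 / qp q (2 * n) * qbin q (2 * n) (n + k)"
      using eventually_ge_at_top[of k]
    proof eventually_elim
      case (elim n)
      then have "n + k \<le> 2*n" by simp
      from qbin_eq[OF q this] have "qbin q (2*n) (n+k) = qp q (2*n) / (qp q (n+k) * qp q (n - k))"
        by (simp add: \<open>k \<le> n\<close>)
      then show ?case using qp_pos[OF q, of "2*n"] by simp
    qed
  qed
qed

lemma W_bound: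
  fixes q L :: real
  assumes q: "0 < q" "q < 1" and L: "0 < L" "\<forall>n. L \<le> qp q n"
  shows "0 \<le> L^2 / qp q (2*n) * qbin q (2*n) (n+k) \<and> L^2 / qp q (2*n) * qbin q (2*n) (n+k) \<le> 1"
proof (cases "k \<le> n")
  case True
  then have "n + k \<le> 2*n" by simp
  from qbin_eq[OF q this] have e: "L^2 / qp q (2*n) * qbin q (2*n) (n+k) = L^2 / (qp q (n+k) * qp q (n - k))"
    using qp_pos[OF q, of "2*n"] True by simp
  have p1: "0 < qp q (n+k)" "0 < qp q (n-k)" using qp_pos[OF q] by auto
  have "L * L \<le> qp q (n+k) * qp q (n - k)"
    using L p1 by (intro mult_mono) auto
  then show ?thesis unfolding e using p1 L by (simp add: power2_eq_square divide_le_eq_1)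
next
  case False
  then show ?thesis by (simp add: qbin_zero)
qed


lemma jtp_limit:
  fixes q x L :: real
  assumes q: "0 < q" "q < 1" and x: "x \<noteq> 0" and lim: "qp q \<longlonglongrightarrow> L"
    and L: "0 < L" "\<forall>n. L \<le> qp q n"
  shows "(\<lambda>n. L^2 / qp q (2*n) * (\<Prod>i<n. (1 + q^i/x) * (1 + x * q^Suc i)))
           \<longlonglongrightarrow> theta q x + theta q (1/x) / x"
proof -
  define W where "W n k = L^2 / qp q (2*n) * qbin q (2*n) (n+k)" for n k
  define a1 where "a1 k n = q ^ tri k * x ^ k * W n k" for k n
  define a2 where "a2 i n = q ^ tri i * (1/x) ^ Suc i * W n (Suc i)" for i n
  have Wb: "0 \<le> W n k" "W n k \<le> 1" for n k using W_bound[OF q L] by (simp_all add: W_def)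
  have Wl: "(\<lambda>n. W n k) \<longlonglongrightarrow> 1" for k unfolding W_def by (rule W_lim[OF q lim L(1)])
  have Wz: "W n k = 0" if "n < k" for n k using that by (simp add: W_def qbin_zero)
  have t1: "(\<lambda>n. suminf (\<lambda>k. a1 k n)) \<longlonglongrightarrow> suminf (\<lambda>k. q ^ tri k * x ^ k)"
  proof -
    have lk: "(\<lambda>n. a1 k n) \<longlonglongrightarrow> q ^ tri k * x ^ k" for k
      unfolding a1_def using tendsto_mult[OF tendsto_const Wl, of "q ^ tri k * x ^ k" k] by simp
    have bd: "\<forall>\<^sub>F (k, n) in at_top \<times>\<^sub>F sequentially. norm (a1 k n) \<le> norm (q ^ tri k * x ^ k)"
    proof (intro always_eventually allI, clarify)
      fix k n
      have "norm (a1 k n) = norm (q ^ tri k * x ^ k) * W n k" unfolding a1_def using Wb[of n k] by (simp add: abs_mult)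
      also have "\<dots> \<le> norm (q ^ tri k * x ^ k) * 1" by (intro mult_left_mono Wb) auto
      finally show "norm (a1 k n) \<le> norm (q ^ tri k * x ^ k)" by simp
    qed
    from tannerys_theorem[OF lk bd summable_theta_norm[OF q]] show ?thesis by simp
  qed
  have t2: "(\<lambda>n. suminf (\<lambda>i. a2 i n)) \<longlonglongrightarrow> suminf (\<lambda>i. q ^ tri i * (1/x) ^ Suc i)"
  proof -
    have lk: "(\<lambda>n. a2 i n) \<longlonglongrightarrow> q ^ tri i * (1/x) ^ Suc i" for i
      unfolding a2_def using tendsto_mult[OF tendsto_const Wl, of "q ^ tri i * (1/x) ^ Suc i" "Suc i"] by simp
    have bd: "\<forall>\<^sub>F (i, n) in at_top \<times>\<^sub>F sequentially. norm (a2 i n) \<le> norm (1/x) * norm (q ^ tri i * (1/x) ^ i)"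
    proof (intro always_eventually allI, clarify)
      fix i n
      have "norm (a2 i n) = norm (1/x) * norm (q ^ tri i * (1/x) ^ i) * W n (Suc i)"
        unfolding a2_def using Wb[of n "Suc i"] by (simp add: abs_mult)
      also have "\<dots> \<le> norm (1/x) * norm (q ^ tri i * (1/x) ^ i) * 1" by (intro mult_left_mono Wb) auto
      finally show "norm (a2 i n) \<le> norm (1/x) * norm (q ^ tri i * (1/x) ^ i)" by simp
    qed
    have sm: "summable (\<lambda>i. norm (1/x) * norm (q ^ tri i * (1/x) ^ i))"
      by (intro summable_mult summable_theta_norm[OF q])
    from tannerys_theorem[OF lk bd sm] show ?thesis by simp
  qed
  have s1: "suminf (\<lambda>k. a1 k n) = (\<Sum>k\<le>n. a1 k n)" for n
    by (rule suminf_finite) (auto simp: a1_def Wz)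
  have s2: "suminf (\<lambda>i. a2 i n) = (\<Sum>i<n. a2 i n)" for n
    by (rule suminf_finite) (auto simp: a2_def Wz)
  have th1: "suminf (\<lambda>k. q ^ tri k * x ^ k) = theta q x" by (simp add: theta_def')
  have th2: "suminf (\<lambda>i. q ^ tri i * (1/x) ^ Suc i) = theta q (1/x) / x"
  proof -
    have "suminf (\<lambda>i. q ^ tri i * (1/x) ^ Suc i) = suminf (\<lambda>i. (1/x) * (q ^ tri i * (1/x) ^ i))"
      by (simp add: mult.commute mult.left_commute)
    also have "\<dots> = (1/x) * theta q (1/x)" unfolding theta_def' by (rule suminf_mult[OF summable_theta[OF q]])
    finally show ?thesis by simp
  qed
  have eq: "L^2 / qp q (2*n) * (\<Prod>i<n. (1 + q^i/x) * (1 + x * q^Suc i))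
      = suminf (\<lambda>k. a1 k n) + suminf (\<lambda>i. a2 i n)" for n
  proof -
    have "L^2 / qp q (2*n) * (\<Prod>i<n. (1 + q^i/x) * (1 + x * q^Suc i))
      = (\<Sum>k\<le>n. a1 k n) + (\<Sum>i<n. a2 i n)"
      apply (subst jtp_finite[OF q x])
      apply (simp only: distrib_left sum_distrib_left)
      by (intro arg_cong2[where f="(+)"] sum.cong refl) (simp_all add: a1_def a2_def W_def mult_ac)
    then show ?thesis unfolding s1 s2 .
  qed
  show ?thesis unfolding eq using tendsto_add[OF t1 t2] unfolding th1 th2 .
qed


definition gfac :: "real \<Rightarrow> real \<Rightarrow> nat \<Rightarrow> real" where
  "gfac q y i = (1 - q ^ Suc i) * (1 - q ^ i / y) * \<bar>1 - y * q ^ Suc i\<bar>"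

definition G :: "real \<Rightarrow> real \<Rightarrow> nat \<Rightarrow> real" where
  "G q y n = (\<Prod>i<n. gfac q y i)"

lemma G_0 [simp]: "G q y 0 = 1" by (simp add: G_def)
lemma G_Suc: "G q y (Suc n) = G q y n * gfac q y n" by (simp add: G_def)

lemma gfac_bounds:
  fixes q y :: real
  assumes q: "0 < q" "q < 1" and y: "1 \<le> y" "y \<le> 5"
  shows "0 \<le> gfac q y i" "gfac q y i \<le> 1" "1/5 \<le> q ^ Suc i \<Longrightarrow> gfac q y i \<le> 4/5"
proof -
  define w where "w = q ^ Suc i"
  have w: "0 < w" "w < 1" unfolding w_def using q power_Suc_less_one[OF q, of i] by simp_all
  have qi: "0 < q ^ i" "q ^ i \<le> 1" using q by (simp_all add: power_le_one)
  have f2: "0 \<le> 1 - q ^ i / y" "1 - q ^ i / y \<le> 1" using qi y by (simp_all add: divide_le_eq_1)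
  have key: "(1 - w) * \<bar>1 - y * w\<bar> \<le> 1" "1/5 \<le> w \<Longrightarrow> (1 - w) * \<bar>1 - y * w\<bar> \<le> 4/5"
  proof -
    have "(1 - w) * \<bar>1 - y * w\<bar> \<le> 1 \<and> (1/5 \<le> w \<longrightarrow> (1 - w) * \<bar>1 - y * w\<bar> \<le> 4/5)"
    proof (cases "y * w \<le> 2")
      case True
      then have "\<bar>1 - y * w\<bar> \<le> 1" using w y by (simp add: abs_le_iff)
      then have a: "(1 - w) * \<bar>1 - y * w\<bar> \<le> (1 - w) * 1" using w by (intro mult_left_mono) auto
      have a': "(1 - w) * \<bar>1 - y * w\<bar> \<le> 1 - w" using a by simp
      show ?thesis
      proof (intro conjI impI)
        show "(1 - w) * \<bar>1 - y * w\<bar> \<le> 1" using a' w by linarith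
        show "(1 - w) * \<bar>1 - y * w\<bar> \<le> 4/5" if "1/5 \<le> w" using a' that by linarith
      qed
    next
      case False
      then have "\<bar>1 - y * w\<bar> = y * w - 1" by simp
      also have "\<dots> \<le> 5 * w - 1" using y w by (simp add: mult_right_mono)
      finally have "(1 - w) * \<bar>1 - y * w\<bar> \<le> (1 - w) * (5 * w - 1)" using w by (intro mult_left_mono) auto
      also have "\<dots> \<le> 4/5"
      proof -
        have "0 \<le> 5 * (w - 3/5)^2" by simp
        then show ?thesis by (simp add: power2_eq_square algebra_simps)
      qed
      finally show ?thesis by simp
    qed
    then show "(1 - w) * \<bar>1 - y * w\<bar> \<le> 1" "1/5 \<le> w \<Longrightarrow> (1 - w) * \<bar>1 - y * w\<bar> \<le> 4/5" by auto
  qed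
  have eq: "gfac q y i = (1 - q ^ i / y) * ((1 - w) * \<bar>1 - y * w\<bar>)"
    unfolding gfac_def w_def by (simp add: algebra_simps)
  show "0 \<le> gfac q y i" unfolding eq using f2 w by simp
  show "gfac q y i \<le> 1" unfolding eq
    using mult_mono[OF f2(2) key(1)] f2 w by simp
  show "gfac q y i \<le> 4/5" if "1/5 \<le> q ^ Suc i"
    unfolding eq using mult_mono[OF f2(2) key(2)] f2 w that by (simp add: w_def)
qed

lemma G_nonneg: "0 < q \<Longrightarrow> q < 1 \<Longrightarrow> 1 \<le> y \<Longrightarrow> y \<le> 5 \<Longrightarrow> 0 \<le> G q y n"
  unfolding G_def by (intro prod_nonneg) (use gfac_bounds in auto)

lemma G_antimono:
  assumes "0 < q" "q < 1" "1 \<le> y" "y \<le> 5" "N \<le> n"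
  shows "G q y n \<le> G q y N"
  using assms(5)
proof (induction n rule: dec_induct)
  case (step n)
  have "G q y n * gfac q y n \<le> G q y n * 1"
    using G_nonneg[OF assms(1-4)] gfac_bounds[OF assms(1-4)] by (intro mult_left_mono) auto
  then show ?case using step by (simp add: G_Suc)
qed simp

lemma key_bound:
  fixes q y :: real
  assumes q: "0 < q" "q < 1" and y: "1 \<le> y" "y \<le> 5"
  shows "\<bar>theta q (-y) - theta q (-(1/y)) / y\<bar> \<le> G q y N"
proof -
  obtain L where L: "qp q \<longlonglongrightarrow> L" "0 < L" "\<forall>n. L \<le> qp q n" using qp_limit[OF q] by blast
  have x: "-y \<noteq> 0" using y by simp
  define s where "s n = L^2 / qp q (2*n) * (\<Prod>i<n. (1 + q^i/(-y)) * (1 + (-y) * q^Suc i))" for n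
  have lim: "s \<longlonglongrightarrow> theta q (-y) + theta q (1/(-y)) / (-y)"
    unfolding s_def by (rule jtp_limit[OF q x L])
  have e: "theta q (-y) + theta q (1/(-y)) / (-y) = theta q (-y) - theta q (-(1/y)) / y" by simp
  have lim': "(\<lambda>n. \<bar>s n\<bar>) \<longlonglongrightarrow> \<bar>theta q (-y) - theta q (-(1/y)) / y\<bar>"
    using tendsto_rabs[OF lim] unfolding e .
  have bd: "\<bar>s n\<bar> \<le> G q y N" if "N \<le> n" for n
  proof -
    have pp: "\<bar>\<Prod>i<n. (1 + q^i/(-y)) * (1 + (-y) * q^Suc i)\<bar> = (\<Prod>i<n. (1 - q^i/y) * \<bar>1 - y * q^Suc i\<bar>)"
    proof -
      have "\<bar>\<Prod>i<n. (1 + q^i/(-y)) * (1 + (-y) * q^Suc i)\<bar> = (\<Prod>i<n. \<bar>(1 + q^i/(-y)) * (1 + (-y) * q^Suc i)\<bar>)"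
        by (rule abs_prod)
      also have "\<dots> = (\<Prod>i<n. (1 - q^i/y) * \<bar>1 - y * q^Suc i\<bar>)"
      proof (rule prod.cong[OF refl])
        fix i
        have "q ^ i \<le> 1" using q by (simp add: power_le_one)
        then have "0 \<le> 1 - q^i/y" using y by (simp add: divide_le_eq_1)
        then show "\<bar>(1 + q^i/(-y)) * (1 + (-y) * q^Suc i)\<bar> = (1 - q^i/y) * \<bar>1 - y * q^Suc i\<bar>"
          by (simp add: abs_mult)
      qed
      finally show ?thesis .
    qed
    have Gn: "G q y n = qp q n * (\<Prod>i<n. (1 - q^i/y) * \<bar>1 - y * q^Suc i\<bar>)"
      unfolding G_def gfac_def qp_def prod.distrib[symmetric] by (simp add: mult.assoc)
    have P0: "0 \<le> (\<Prod>i<n. (1 - q^i/y) * \<bar>1 - y * q^Suc i\<bar>)"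
    proof (intro prod_nonneg ballI mult_nonneg_nonneg)
      fix i
      have "q ^ i \<le> 1" using q by (simp add: power_le_one)
      then show "0 \<le> 1 - q^i/y" using y by (simp add: divide_le_eq_1)
    qed simp
    have c: "L^2 / qp q (2*n) \<le> qp q n"
    proof -
      have p: "0 < qp q (2*n)" "0 < qp q n" using qp_pos[OF q] by auto
      have "L * L \<le> qp q (2*n) * qp q n" using L p by (intro mult_mono) auto
      then show ?thesis using p by (simp add: power2_eq_square divide_le_eq mult.commute)
    qed
    have c0: "0 \<le> L^2 / qp q (2*n)" using qp_pos[OF q, of "2*n"] by simp
    have "\<bar>s n\<bar> = \<bar>L^2 / qp q (2*n)\<bar> * \<bar>\<Prod>i<n. (1 + q^i/(-y)) * (1 + (-y) * q^Suc i)\<bar>"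
      unfolding s_def by (rule abs_mult)
    also have "\<dots> = L^2 / qp q (2*n) * (\<Prod>i<n. (1 - q^i/y) * \<bar>1 - y * q^Suc i\<bar>)"
      unfolding pp abs_of_nonneg[OF c0] ..
    also have "\<dots> \<le> qp q n * (\<Prod>i<n. (1 - q^i/y) * \<bar>1 - y * q^Suc i\<bar>)"
      by (intro mult_right_mono c P0)
    also have "\<dots> = G q y n" unfolding Gn ..
    also have "\<dots> \<le> G q y N" by (rule G_antimono[OF q y that])
    finally show ?thesis .
  qed
  show ?thesis
    by (rule tendsto_upperbound[OF lim' eventually_mono[OF eventually_ge_at_top[of N] bd]]) (use trivial_limit_sequentially in auto)
qed


lemma gfac_box:
  fixes q y q1 q2 y1 y2 r :: real
  assumes q1: "0 < q1" "q1 \<le> q" "q \<le> q2" "q2 < 1" and y1: "1 \<le> y1" "y1 \<le> y" "y \<le> y2"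
    and num: "(1 - q1 ^ Suc i) * (1 - q1 ^ i / y2) * max (1 - y1 * q1 ^ Suc i) (y2 * q2 ^ Suc i - 1) \<le> r"
  shows "gfac q y i \<le> r"
proof -
  have q: "0 < q" "q < 1" using q1 by auto
  have A: "0 \<le> 1 - q ^ Suc i" "1 - q ^ Suc i \<le> 1 - q1 ^ Suc i"
    using power_Suc_less_one[OF q, of i] power_mono[of q1 q "Suc i"] q1 by auto
  have qi: "q1 ^ i \<le> q ^ i" "q ^ i \<le> 1" "0 \<le> q1 ^ i" using power_mono[of q1 q i] q1 q by (auto simp: power_le_one)
  have B: "0 \<le> 1 - q ^ i / y" "1 - q ^ i / y \<le> 1 - q1 ^ i / y2"
  proof -
    show "0 \<le> 1 - q ^ i / y" using qi y1 by (simp add: divide_le_eq_1)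
    have "q1 ^ i / y2 \<le> q ^ i / y" using qi y1 by (intro frac_le) auto
    then show "1 - q ^ i / y \<le> 1 - q1 ^ i / y2" by simp
  qed
  have lo: "y1 * q1 ^ Suc i \<le> y * q ^ Suc i"
    using y1 q1 by (intro mult_mono power_mono) auto
  have hi: "y * q ^ Suc i \<le> y2 * q2 ^ Suc i"
    using y1 q1 by (intro mult_mono power_mono) auto
  have C: "\<bar>1 - y * q ^ Suc i\<bar> \<le> max (1 - y1 * q1 ^ Suc i) (y2 * q2 ^ Suc i - 1)"
    using lo hi by (simp add: abs_le_iff max_def)
  have "gfac q y i \<le> (1 - q1 ^ Suc i) * (1 - q1 ^ i / y2) * max (1 - y1 * q1 ^ Suc i) (y2 * q2 ^ Suc i - 1)"
    unfolding gfac_def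
    by (intro mult_mono A B C mult_nonneg_nonneg abs_ge_zero) (use A B in auto)
  then show ?thesis using num by linarith
qed

lemma conc_min:
  fixes a b c z :: real
  assumes "a \<le> z" "z \<le> b" "0 \<le> c"
  shows "min (a - c * a^2) (b - c * b^2) \<le> z - c * z^2"
proof (cases "c * (z + a) \<le> 1")
  case True
  have "z - c * z^2 - (a - c * a^2) = (z - a) * (1 - c * (z + a))" by (simp add: power2_eq_square algebra_simps)
  also have "\<dots> \<ge> 0" using True assms by simp
  finally show ?thesis by simp
next
  case False
  then have "c * (z + b) \<ge> 1" using assms by (smt (verit) mult_left_mono)
  have "z - c * z^2 - (b - c * b^2) = (b - z) * (c * (z + b) - 1)" by (simp add: power2_eq_square algebra_simps)
  also have "\<dots> \<ge> 0" using \<open>c * (z + b) \<ge> 1\<close> assms by simp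
  finally show ?thesis by simp
qed

lemma rhs_box:
  fixes q y q2 y1 y2 :: real
  assumes "0 \<le> q" "q \<le> q2" "1 \<le> y1" "y1 \<le> y" "y \<le> y2"
  shows "min (1/y2 * (1 - q2/y2)) (1/y1 * (1 - q2/y1)) \<le> 1/y * (1 - q/y)"
proof -
  have y0: "0 < y" "0 < y1" "0 < y2" using assms by auto
  have m: "min (1/y2 - q2 * (1/y2)^2) (1/y1 - q2 * (1/y1)^2) \<le> 1/y - q2 * (1/y)^2"
    using assms y0 by (intro conc_min) (auto simp: frac_le)
  have "1/y - q2 * (1/y)^2 \<le> 1/y - q * (1/y)^2" using assms by (simp add: mult_right_mono)
  with m show ?thesis by (simp add: power2_eq_square algebra_simps)
qed

lemma G_le_step:
  "G q y n \<le> R \<Longrightarrow> gfac q y n \<le> r \<Longrightarrow> 0 \<le> R \<Longrightarrow> 0 \<le> gfac q y n \<Longrightarrow> G q y (Suc n) \<le> R * r"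
  unfolding G_Suc by (rule mult_mono)


lemma ylow:
  fixes q q2 y Y :: real
  assumes "0 < q2" "q \<le> q2" "0 < q" "1 < q * y" "Y * q2 \<le> 1"
  shows "Y \<le> y"
proof -
  have y0: "0 < y" using assms(3,4) by (smt (verit) mult_nonneg_nonpos)
  have "Y * q2 \<le> q * y" using assms by linarith
  also have "q * y \<le> q2 * y" using assms y0 by (intro mult_right_mono) auto
  also have "q2 * y = y * q2" by (rule mult.commute)
  finally have "Y * q2 \<le> y * q2" .
  then show ?thesis using assms(1) by (rule mult_right_le_imp_le)
qed


lemma box1:
  fixes q y :: real
  assumes a: "(1/5) \<le> q" "q \<le> (1/4)" "(4) \<le> y" "y \<le> (5)"
  shows "\<exists>N. G q y N < 1/y * (1 - q/y)"
proof -
  have h: "0 < q" "q < 1" "1 \<le> y" "y \<le> 5" using a by auto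
  have n: "0 \<le> gfac q y k" for k using gfac_bounds(1)[OF h] .
  have f0: "gfac q y (0) \<le> (161/1000)"
    by (rule gfac_box[OF _ a(1,2) _ _ a(3,4)]) (simp_all add: max_def)
  have c0: "G q y (Suc 0) \<le> (1::real) * (161/1000)" by (rule G_le_step[OF _ f0 _ n]) simp_all
  have rb: "min (1/(5) * (1 - (1/4)/(5))) (1/(4) * (1 - (1/4)/(4))) \<le> 1/y * (1 - q/y)"
    by (rule rhs_box[OF _ a(2) _ a(3,4)]) (use h in auto)
  have num: "(1::real) * (161/1000) < min (1/(5) * (1 - (1/4)/(5))) (1/(4) * (1 - (1/4)/(4)))" by (simp add: min_def)
  have "G q y (Suc 0) < 1/y * (1 - q/y)" using c0 rb num by linarith
  then show ?thesis by blast
qed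

lemma qint0:
  fixes q y :: real
  assumes a: "(1/5) \<le> q" "q \<le> (1/4)" "1 < q * y" "y \<le> 5"
  shows "\<exists>N. G q y N < 1/y * (1 - q/y)"
proof -
  have yl: "(4) \<le> y" by (rule ylow[OF _ a(2) _ a(3)]) (use a in auto)
  show ?thesis by (rule box1[OF a(1,2) yl a(4)])
qed

lemma box2:
  fixes q y :: real
  assumes a: "(1/4) \<le> q" "q \<le> (3/10)" "(33/10) \<le> y" "y \<le> (41/10)"
  shows "\<exists>N. G q y N < 1/y * (1 - q/y)"
proof -
  have h: "0 < q" "q < 1" "1 \<le> y" "y \<le> 5" using a by auto
  have n: "0 \<le> gfac q y k" for k using gfac_bounds(1)[OF h] .
  have f0: "gfac q y (0) \<le> (131/1000)"
    by (rule gfac_box[OF _ a(1,2) _ _ a(3,4)]) (simp_all add: max_def)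
  have c0: "G q y (Suc 0) \<le> (1::real) * (131/1000)" by (rule G_le_step[OF _ f0 _ n]) simp_all
  have rb: "min (1/(41/10) * (1 - (3/10)/(41/10))) (1/(33/10) * (1 - (3/10)/(33/10))) \<le> 1/y * (1 - q/y)"
    by (rule rhs_box[OF _ a(2) _ a(3,4)]) (use h in auto)
  have num: "(1::real) * (131/1000) < min (1/(41/10) * (1 - (3/10)/(41/10))) (1/(33/10) * (1 - (3/10)/(33/10)))" by (simp add: min_def)
  have "G q y (Suc 0) < 1/y * (1 - q/y)" using c0 rb num by linarith
  then show ?thesis by blast
qed

lemma box3:
  fixes q y :: real
  assumes a: "(1/4) \<le> q" "q \<le> (3/10)" "(41/10) \<le> y" "y \<le> (5)"
  shows "\<exists>N. G q y N < 1/y * (1 - q/y)"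
proof -
  have h: "0 < q" "q < 1" "1 \<le> y" "y \<le> 5" using a by auto
  have n: "0 \<le> gfac q y k" for k using gfac_bounds(1)[OF h] .
  have f0: "gfac q y (0) \<le> (301/1000)"
    by (rule gfac_box[OF _ a(1,2) _ _ a(3,4)]) (simp_all add: max_def)
  have c0: "G q y (Suc 0) \<le> (1::real) * (301/1000)" by (rule G_le_step[OF _ f0 _ n]) simp_all
  have f1: "gfac q y (Suc 0) \<le> (663/1000)"
    by (rule gfac_box[OF _ a(1,2) _ _ a(3,4)]) (simp_all add: max_def)
  have c1: "G q y (Suc (Suc 0)) \<le> (1::real) * (301/1000) * (663/1000)" by (rule G_le_step[OF c0 f1 _ n]) simp
  have f2: "gfac q y (Suc (Suc 0)) \<le> (91/100)"
    by (rule gfac_box[OF _ a(1,2) _ _ a(3,4)]) (simp_all add: max_def)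
  have c2: "G q y (Suc (Suc (Suc 0))) \<le> (1::real) * (301/1000) * (663/1000) * (91/100)" by (rule G_le_step[OF c1 f2 _ n]) simp
  have rb: "min (1/(5) * (1 - (3/10)/(5))) (1/(41/10) * (1 - (3/10)/(41/10))) \<le> 1/y * (1 - q/y)"
    by (rule rhs_box[OF _ a(2) _ a(3,4)]) (use h in auto)
  have num: "(1::real) * (301/1000) * (663/1000) * (91/100) < min (1/(5) * (1 - (3/10)/(5))) (1/(41/10) * (1 - (3/10)/(41/10)))" by (simp add: min_def)
  have "G q y (Suc (Suc (Suc 0))) < 1/y * (1 - q/y)" using c2 rb num by linarith
  then show ?thesis by blast
qed

lemma qint1:
  fixes q y :: real
  assumes a: "(1/4) \<le> q" "q \<le> (3/10)" "1 < q * y" "y \<le> 5"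
  shows "\<exists>N. G q y N < 1/y * (1 - q/y)"
proof -
  have yl: "(33/10) \<le> y" by (rule ylow[OF _ a(2) _ a(3)]) (use a in auto)
  have "y \<le> (41/10) \<or> (41/10) \<le> y" by linarith
  then show ?thesis
  proof (elim disjE conjE)
    assume c: "y \<le> (41/10)"
    show ?thesis by (rule box2[OF a(1,2) yl c])
  next
    assume c: "(41/10) \<le> y"
    show ?thesis by (rule box3[OF a(1,2) c a(4)])
  qed
qed

lemma box4:
  fixes q y :: real
  assumes a: "(3/10) \<le> q" "q \<le> (7/20)" "(14/5) \<le> y" "y \<le> (39/10)"
  shows "\<exists>N. G q y N < 1/y * (1 - q/y)"
proof -
  have h: "0 < q" "q < 1" "1 \<le> y" "y \<le> 5" using a by auto
  have n: "0 \<le> gfac q y k" for k using gfac_bounds(1)[OF h] .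
  have f0: "gfac q y (0) \<le> (19/100)"
    by (rule gfac_box[OF _ a(1,2) _ _ a(3,4)]) (simp_all add: max_def)
  have c0: "G q y (Suc 0) \<le> (1::real) * (19/100)" by (rule G_le_step[OF _ f0 _ n]) simp_all
  have rb: "min (1/(39/10) * (1 - (7/20)/(39/10))) (1/(14/5) * (1 - (7/20)/(14/5))) \<le> 1/y * (1 - q/y)"
    by (rule rhs_box[OF _ a(2) _ a(3,4)]) (use h in auto)
  have num: "(1::real) * (19/100) < min (1/(39/10) * (1 - (7/20)/(39/10))) (1/(14/5) * (1 - (7/20)/(14/5)))" by (simp add: min_def)
  have "G q y (Suc 0) < 1/y * (1 - q/y)" using c0 rb num by linarith
  then show ?thesis by blast
qed

lemma box5:
  fixes q y :: real
  assumes a: "(3/10) \<le> q" "q \<le> (7/20)" "(39/10) \<le> y" "y \<le> (22/5)"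
  shows "\<exists>N. G q y N < 1/y * (1 - q/y)"
proof -
  have h: "0 < q" "q < 1" "1 \<le> y" "y \<le> 5" using a by auto
  have n: "0 \<le> gfac q y k" for k using gfac_bounds(1)[OF h] .
  have f0: "gfac q y (0) \<le> (293/1000)"
    by (rule gfac_box[OF _ a(1,2) _ _ a(3,4)]) (simp_all add: max_def)
  have c0: "G q y (Suc 0) \<le> (1::real) * (293/1000)" by (rule G_le_step[OF _ f0 _ n]) simp_all
  have f1: "gfac q y (Suc 0) \<le> (551/1000)"
    by (rule gfac_box[OF _ a(1,2) _ _ a(3,4)]) (simp_all add: max_def)
  have c1: "G q y (Suc (Suc 0)) \<le> (1::real) * (293/1000) * (551/1000)" by (rule G_le_step[OF c0 f1 _ n]) simp
  have rb: "min (1/(22/5) * (1 - (7/20)/(22/5))) (1/(39/10) * (1 - (7/20)/(39/10))) \<le> 1/y * (1 - q/y)"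
    by (rule rhs_box[OF _ a(2) _ a(3,4)]) (use h in auto)
  have num: "(1::real) * (293/1000) * (551/1000) < min (1/(22/5) * (1 - (7/20)/(22/5))) (1/(39/10) * (1 - (7/20)/(39/10)))" by (simp add: min_def)
  have "G q y (Suc (Suc 0)) < 1/y * (1 - q/y)" using c1 rb num by linarith
  then show ?thesis by blast
qed

lemma box6:
  fixes q y :: real
  assumes a: "(3/10) \<le> q" "q \<le> (7/20)" "(22/5) \<le> y" "y \<le> (5)"
  shows "\<exists>N. G q y N < 1/y * (1 - q/y)"
proof -
  have h: "0 < q" "q < 1" "1 \<le> y" "y \<le> 5" using a by auto
  have n: "0 \<le> gfac q y k" for k using gfac_bounds(1)[OF h] .
  have f0: "gfac q y (0) \<le> (421/1000)"
    by (rule gfac_box[OF _ a(1,2) _ _ a(3,4)]) (simp_all add: max_def)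
  have c0: "G q y (Suc 0) \<le> (1::real) * (421/1000)" by (rule G_le_step[OF _ f0 _ n]) simp_all
  have f1: "gfac q y (Suc 0) \<le> (517/1000)"
    by (rule gfac_box[OF _ a(1,2) _ _ a(3,4)]) (simp_all add: max_def)
  have c1: "G q y (Suc (Suc 0)) \<le> (1::real) * (421/1000) * (517/1000)" by (rule G_le_step[OF c0 f1 _ n]) simp
  have f2: "gfac q y (Suc (Suc 0)) \<le> (421/500)"
    by (rule gfac_box[OF _ a(1,2) _ _ a(3,4)]) (simp_all add: max_def)
  have c2: "G q y (Suc (Suc (Suc 0))) \<le> (1::real) * (421/1000) * (517/1000) * (421/500)" by (rule G_le_step[OF c1 f2 _ n]) simp
  have rb: "min (1/(5) * (1 - (7/20)/(5))) (1/(22/5) * (1 - (7/20)/(22/5))) \<le> 1/y * (1 - q/y)"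
    by (rule rhs_box[OF _ a(2) _ a(3,4)]) (use h in auto)
  have num: "(1::real) * (421/1000) * (517/1000) * (421/500) < min (1/(5) * (1 - (7/20)/(5))) (1/(22/5) * (1 - (7/20)/(22/5)))" by (simp add: min_def)
  have "G q y (Suc (Suc (Suc 0))) < 1/y * (1 - q/y)" using c2 rb num by linarith
  then show ?thesis by blast
qed

lemma qint2:
  fixes q y :: real
  assumes a: "(3/10) \<le> q" "q \<le> (7/20)" "1 < q * y" "y \<le> 5"
  shows "\<exists>N. G q y N < 1/y * (1 - q/y)"
proof -
  have yl: "(14/5) \<le> y" by (rule ylow[OF _ a(2) _ a(3)]) (use a in auto)
  have "y \<le> (39/10) \<or> ((39/10) \<le> y \<and> y \<le> (22/5)) \<or> (22/5) \<le> y" by linarith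
  then show ?thesis
  proof (elim disjE conjE)
    assume c: "y \<le> (39/10)"
    show ?thesis by (rule box4[OF a(1,2) yl c])
  next
    assume c: "(39/10) \<le> y" "y \<le> (22/5)"
    show ?thesis by (rule box5[OF a(1,2) c])
  next
    assume c: "(22/5) \<le> y"
    show ?thesis by (rule box6[OF a(1,2) c a(4)])
  qed
qed

lemma box7:
  fixes q y :: real
  assumes a: "(7/20) \<le> q" "q \<le> (2/5)" "(5/2) \<le> y" "y \<le> (37/10)"
  shows "\<exists>N. G q y N < 1/y * (1 - q/y)"
proof -
  have h: "0 < q" "q < 1" "1 \<le> y" "y \<le> 5" using a by auto
  have n: "0 \<le> gfac q y k" for k using gfac_bounds(1)[OF h] .
  have f0: "gfac q y (0) \<le> (57/250)"
    by (rule gfac_box[OF _ a(1,2) _ _ a(3,4)]) (simp_all add: max_def)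
  have c0: "G q y (Suc 0) \<le> (1::real) * (57/250)" by (rule G_le_step[OF _ f0 _ n]) simp_all
  have rb: "min (1/(37/10) * (1 - (2/5)/(37/10))) (1/(5/2) * (1 - (2/5)/(5/2))) \<le> 1/y * (1 - q/y)"
    by (rule rhs_box[OF _ a(2) _ a(3,4)]) (use h in auto)
  have num: "(1::real) * (57/250) < min (1/(37/10) * (1 - (2/5)/(37/10))) (1/(5/2) * (1 - (2/5)/(5/2)))" by (simp add: min_def)
  have "G q y (Suc 0) < 1/y * (1 - q/y)" using c0 rb num by linarith
  then show ?thesis by blast
qed

lemma box8:
  fixes q y :: real
  assumes a: "(7/20) \<le> q" "q \<le> (2/5)" "(37/10) \<le> y" "y \<le> (5)"
  shows "\<exists>N. G q y N < 1/y * (1 - q/y)"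
proof -
  have h: "0 < q" "q < 1" "1 \<le> y" "y \<le> 5" using a by auto
  have n: "0 \<le> gfac q y k" for k using gfac_bounds(1)[OF h] .
  have f0: "gfac q y (0) \<le> (521/1000)"
    by (rule gfac_box[OF _ a(1,2) _ _ a(3,4)]) (simp_all add: max_def)
  have c0: "G q y (Suc 0) \<le> (1::real) * (521/1000)" by (rule G_le_step[OF _ f0 _ n]) simp_all
  have f1: "gfac q y (Suc 0) \<le> (447/1000)"
    by (rule gfac_box[OF _ a(1,2) _ _ a(3,4)]) (simp_all add: max_def)
  have c1: "G q y (Suc (Suc 0)) \<le> (1::real) * (521/1000) * (447/1000)" by (rule G_le_step[OF c0 f1 _ n]) simp
  have f2: "gfac q y (Suc (Suc 0)) \<le> (393/500)"
    by (rule gfac_box[OF _ a(1,2) _ _ a(3,4)]) (simp_all add: max_def)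
  have c2: "G q y (Suc (Suc (Suc 0))) \<le> (1::real) * (521/1000) * (447/1000) * (393/500)" by (rule G_le_step[OF c1 f2 _ n]) simp
  have rb: "min (1/(5) * (1 - (2/5)/(5))) (1/(37/10) * (1 - (2/5)/(37/10))) \<le> 1/y * (1 - q/y)"
    by (rule rhs_box[OF _ a(2) _ a(3,4)]) (use h in auto)
  have num: "(1::real) * (521/1000) * (447/1000) * (393/500) < min (1/(5) * (1 - (2/5)/(5))) (1/(37/10) * (1 - (2/5)/(37/10)))" by (simp add: min_def)
  have "G q y (Suc (Suc (Suc 0))) < 1/y * (1 - q/y)" using c2 rb num by linarith
  then show ?thesis by blast
qed

lemma qint3:
  fixes q y :: real
  assumes a: "(7/20) \<le> q" "q \<le> (2/5)" "1 < q * y" "y \<le> 5"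
  shows "\<exists>N. G q y N < 1/y * (1 - q/y)"
proof -
  have yl: "(5/2) \<le> y" by (rule ylow[OF _ a(2) _ a(3)]) (use a in auto)
  have "y \<le> (37/10) \<or> (37/10) \<le> y" by linarith
  then show ?thesis
  proof (elim disjE conjE)
    assume c: "y \<le> (37/10)"
    show ?thesis by (rule box7[OF a(1,2) yl c])
  next
    assume c: "(37/10) \<le> y"
    show ?thesis by (rule box8[OF a(1,2) c a(4)])
  qed
qed

lemma box9:
  fixes q y :: real
  assumes a: "(2/5) \<le> q" "q \<le> (9/20)" "(11/5) \<le> y" "y \<le> (18/5)"
  shows "\<exists>N. G q y N < 1/y * (1 - q/y)"
proof -
  have h: "0 < q" "q < 1" "1 \<le> y" "y \<le> 5" using a by auto
  have n: "0 \<le> gfac q y k" for k using gfac_bounds(1)[OF h] .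
  have f0: "gfac q y (0) \<le> (269/1000)"
    by (rule gfac_box[OF _ a(1,2) _ _ a(3,4)]) (simp_all add: max_def)
  have c0: "G q y (Suc 0) \<le> (1::real) * (269/1000)" by (rule G_le_step[OF _ f0 _ n]) simp_all
  have f1: "gfac q y (Suc 0) \<le> (121/250)"
    by (rule gfac_box[OF _ a(1,2) _ _ a(3,4)]) (simp_all add: max_def)
  have c1: "G q y (Suc (Suc 0)) \<le> (1::real) * (269/1000) * (121/250)" by (rule G_le_step[OF c0 f1 _ n]) simp
  have rb: "min (1/(18/5) * (1 - (9/20)/(18/5))) (1/(11/5) * (1 - (9/20)/(11/5))) \<le> 1/y * (1 - q/y)"
    by (rule rhs_box[OF _ a(2) _ a(3,4)]) (use h in auto)
  have num: "(1::real) * (269/1000) * (121/250) < min (1/(18/5) * (1 - (9/20)/(18/5))) (1/(11/5) * (1 - (9/20)/(11/5)))" by (simp add: min_def)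
  have "G q y (Suc (Suc 0)) < 1/y * (1 - q/y)" using c1 rb num by linarith
  then show ?thesis by blast
qed

lemma box10:
  fixes q y :: real
  assumes a: "(2/5) \<le> q" "q \<le> (9/20)" "(18/5) \<le> y" "y \<le> (5)"
  shows "\<exists>N. G q y N < 1/y * (1 - q/y)"
proof -
  have h: "0 < q" "q < 1" "1 \<le> y" "y \<le> 5" using a by auto
  have n: "0 \<le> gfac q y k" for k using gfac_bounds(1)[OF h] .
  have f0: "gfac q y (0) \<le> (601/1000)"
    by (rule gfac_box[OF _ a(1,2) _ _ a(3,4)]) (simp_all add: max_def)
  have c0: "G q y (Suc 0) \<le> (1::real) * (601/1000)" by (rule G_le_step[OF _ f0 _ n]) simp_all
  have f1: "gfac q y (Suc 0) \<le> (41/125)"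
    by (rule gfac_box[OF _ a(1,2) _ _ a(3,4)]) (simp_all add: max_def)
  have c1: "G q y (Suc (Suc 0)) \<le> (1::real) * (601/1000) * (41/125)" by (rule G_le_step[OF c0 f1 _ n]) simp
  have f2: "gfac q y (Suc (Suc 0)) \<le> (349/500)"
    by (rule gfac_box[OF _ a(1,2) _ _ a(3,4)]) (simp_all add: max_def)
  have c2: "G q y (Suc (Suc (Suc 0))) \<le> (1::real) * (601/1000) * (41/125) * (349/500)" by (rule G_le_step[OF c1 f2 _ n]) simp
  have rb: "min (1/(5) * (1 - (9/20)/(5))) (1/(18/5) * (1 - (9/20)/(18/5))) \<le> 1/y * (1 - q/y)"
    by (rule rhs_box[OF _ a(2) _ a(3,4)]) (use h in auto)
  have num: "(1::real) * (601/1000) * (41/125) * (349/500) < min (1/(5) * (1 - (9/20)/(5))) (1/(18/5) * (1 - (9/20)/(18/5)))" by (simp add: min_def)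
  have "G q y (Suc (Suc (Suc 0))) < 1/y * (1 - q/y)" using c2 rb num by linarith
  then show ?thesis by blast
qed

lemma qint4:
  fixes q y :: real
  assumes a: "(2/5) \<le> q" "q \<le> (9/20)" "1 < q * y" "y \<le> 5"
  shows "\<exists>N. G q y N < 1/y * (1 - q/y)"
proof -
  have yl: "(11/5) \<le> y" by (rule ylow[OF _ a(2) _ a(3)]) (use a in auto)
  have "y \<le> (18/5) \<or> (18/5) \<le> y" by linarith
  then show ?thesis
  proof (elim disjE conjE)
    assume c: "y \<le> (18/5)"
    show ?thesis by (rule box9[OF a(1,2) yl c])
  next
    assume c: "(18/5) \<le> y"
    show ?thesis by (rule box10[OF a(1,2) c a(4)])
  qed
qed

lemma box11:
  fixes q y :: real
  assumes a: "(9/20) \<le> q" "q \<le> (1/2)" "(2) \<le> y" "y \<le> (5)"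
  shows "\<exists>N. G q y N < 1/y * (1 - q/y)"
proof -
  have h: "0 < q" "q < 1" "1 \<le> y" "y \<le> 5" using a by auto
  have n: "0 \<le> gfac q y k" for k using gfac_bounds(1)[OF h] .
  have f0: "gfac q y (0) \<le> (661/1000)"
    by (rule gfac_box[OF _ a(1,2) _ _ a(3,4)]) (simp_all add: max_def)
  have c0: "G q y (Suc 0) \<le> (1::real) * (661/1000)" by (rule G_le_step[OF _ f0 _ n]) simp_all
  have f1: "gfac q y (Suc 0) \<le> (54/125)"
    by (rule gfac_box[OF _ a(1,2) _ _ a(3,4)]) (simp_all add: max_def)
  have c1: "G q y (Suc (Suc 0)) \<le> (1::real) * (661/1000) * (54/125)" by (rule G_le_step[OF c0 f1 _ n]) simp
  have f2: "gfac q y (Suc (Suc 0)) \<le> (357/500)"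
    by (rule gfac_box[OF _ a(1,2) _ _ a(3,4)]) (simp_all add: max_def)
  have c2: "G q y (Suc (Suc (Suc 0))) \<le> (1::real) * (661/1000) * (54/125) * (357/500)" by (rule G_le_step[OF c1 f2 _ n]) simp
  have f3: "gfac q y (Suc (Suc (Suc 0))) \<le> (173/200)"
    by (rule gfac_box[OF _ a(1,2) _ _ a(3,4)]) (simp_all add: max_def)
  have c3: "G q y (Suc (Suc (Suc (Suc 0)))) \<le> (1::real) * (661/1000) * (54/125) * (357/500) * (173/200)" by (rule G_le_step[OF c2 f3 _ n]) simp
  have rb: "min (1/(5) * (1 - (1/2)/(5))) (1/(2) * (1 - (1/2)/(2))) \<le> 1/y * (1 - q/y)"
    by (rule rhs_box[OF _ a(2) _ a(3,4)]) (use h in auto)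
  have num: "(1::real) * (661/1000) * (54/125) * (357/500) * (173/200) < min (1/(5) * (1 - (1/2)/(5))) (1/(2) * (1 - (1/2)/(2)))" by (simp add: min_def)
  have "G q y (Suc (Suc (Suc (Suc 0)))) < 1/y * (1 - q/y)" using c3 rb num by linarith
  then show ?thesis by blast
qed

lemma qint5:
  fixes q y :: real
  assumes a: "(9/20) \<le> q" "q \<le> (1/2)" "1 < q * y" "y \<le> 5"
  shows "\<exists>N. G q y N < 1/y * (1 - q/y)"
proof -
  have yl: "(2) \<le> y" by (rule ylow[OF _ a(2) _ a(3)]) (use a in auto)
  show ?thesis by (rule box11[OF a(1,2) yl a(4)])
qed

lemma box12:
  fixes q y :: real
  assumes a: "(1/2) \<le> q" "q \<le> (11/20)" "(9/5) \<le> y" "y \<le> (5)"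
  shows "\<exists>N. G q y N < 1/y * (1 - q/y)"
proof -
  have h: "0 < q" "q < 1" "1 \<le> y" "y \<le> 5" using a by auto
  have n: "0 \<le> gfac q y k" for k using gfac_bounds(1)[OF h] .
  have f0: "gfac q y (0) \<le> (701/1000)"
    by (rule gfac_box[OF _ a(1,2) _ _ a(3,4)]) (simp_all add: max_def)
  have c0: "G q y (Suc 0) \<le> (1::real) * (701/1000)" by (rule G_le_step[OF _ f0 _ n]) simp_all
  have f1: "gfac q y (Suc 0) \<le> (93/250)"
    by (rule gfac_box[OF _ a(1,2) _ _ a(3,4)]) (simp_all add: max_def)
  have c1: "G q y (Suc (Suc 0)) \<le> (1::real) * (701/1000) * (93/250)" by (rule G_le_step[OF c0 f1 _ n]) simp
  have f2: "gfac q y (Suc (Suc 0)) \<le> (129/200)"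
    by (rule gfac_box[OF _ a(1,2) _ _ a(3,4)]) (simp_all add: max_def)
  have c2: "G q y (Suc (Suc (Suc 0))) \<le> (1::real) * (701/1000) * (93/250) * (129/200)" by (rule G_le_step[OF c1 f2 _ n]) simp
  have rb: "min (1/(5) * (1 - (11/20)/(5))) (1/(9/5) * (1 - (11/20)/(9/5))) \<le> 1/y * (1 - q/y)"
    by (rule rhs_box[OF _ a(2) _ a(3,4)]) (use h in auto)
  have num: "(1::real) * (701/1000) * (93/250) * (129/200) < min (1/(5) * (1 - (11/20)/(5))) (1/(9/5) * (1 - (11/20)/(9/5)))" by (simp add: min_def)
  have "G q y (Suc (Suc (Suc 0))) < 1/y * (1 - q/y)" using c2 rb num by linarith
  then show ?thesis by blast
qed

lemma qint6:
  fixes q y :: real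
  assumes a: "(1/2) \<le> q" "q \<le> (11/20)" "1 < q * y" "y \<le> 5"
  shows "\<exists>N. G q y N < 1/y * (1 - q/y)"
proof -
  have yl: "(9/5) \<le> y" by (rule ylow[OF _ a(2) _ a(3)]) (use a in auto)
  show ?thesis by (rule box12[OF a(1,2) yl a(4)])
qed

lemma box13:
  fixes q y :: real
  assumes a: "(11/20) \<le> q" "q \<le> (3/5)" "(8/5) \<le> y" "y \<le> (5)"
  shows "\<exists>N. G q y N < 1/y * (1 - q/y)"
proof -
  have h: "0 < q" "q < 1" "1 \<le> y" "y \<le> 5" using a by auto
  have n: "0 \<le> gfac q y k" for k using gfac_bounds(1)[OF h] .
  have f0: "gfac q y (0) \<le> (721/1000)"
    by (rule gfac_box[OF _ a(1,2) _ _ a(3,4)]) (simp_all add: max_def)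
  have c0: "G q y (Suc 0) \<le> (1::real) * (721/1000)" by (rule G_le_step[OF _ f0 _ n]) simp_all
  have f1: "gfac q y (Suc 0) \<le> (497/1000)"
    by (rule gfac_box[OF _ a(1,2) _ _ a(3,4)]) (simp_all add: max_def)
  have c1: "G q y (Suc (Suc 0)) \<le> (1::real) * (721/1000) * (497/1000)" by (rule G_le_step[OF c0 f1 _ n]) simp
  have f2: "gfac q y (Suc (Suc 0)) \<le> (23/40)"
    by (rule gfac_box[OF _ a(1,2) _ _ a(3,4)]) (simp_all add: max_def)
  have c2: "G q y (Suc (Suc (Suc 0))) \<le> (1::real) * (721/1000) * (497/1000) * (23/40)" by (rule G_le_step[OF c1 f2 _ n]) simp
  have f3: "gfac q y (Suc (Suc (Suc 0))) \<le> (3/4)"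
    by (rule gfac_box[OF _ a(1,2) _ _ a(3,4)]) (simp_all add: max_def)
  have c3: "G q y (Suc (Suc (Suc (Suc 0)))) \<le> (1::real) * (721/1000) * (497/1000) * (23/40) * (3/4)" by (rule G_le_step[OF c2 f3 _ n]) simp
  have rb: "min (1/(5) * (1 - (3/5)/(5))) (1/(8/5) * (1 - (3/5)/(8/5))) \<le> 1/y * (1 - q/y)"
    by (rule rhs_box[OF _ a(2) _ a(3,4)]) (use h in auto)
  have num: "(1::real) * (721/1000) * (497/1000) * (23/40) * (3/4) < min (1/(5) * (1 - (3/5)/(5))) (1/(8/5) * (1 - (3/5)/(8/5)))" by (simp add: min_def)
  have "G q y (Suc (Suc (Suc (Suc 0)))) < 1/y * (1 - q/y)" using c3 rb num by linarith
  then show ?thesis by blast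
qed

lemma qint7:
  fixes q y :: real
  assumes a: "(11/20) \<le> q" "q \<le> (3/5)" "1 < q * y" "y \<le> 5"
  shows "\<exists>N. G q y N < 1/y * (1 - q/y)"
proof -
  have yl: "(8/5) \<le> y" by (rule ylow[OF _ a(2) _ a(3)]) (use a in auto)
  show ?thesis by (rule box13[OF a(1,2) yl a(4)])
qed

lemma box14:
  fixes q y :: real
  assumes a: "(3/5) \<le> q" "q \<le> (13/20)" "(3/2) \<le> y" "y \<le> (5)"
  shows "\<exists>N. G q y N < 1/y * (1 - q/y)"
proof -
  have h: "0 < q" "q < 1" "1 \<le> y" "y \<le> 5" using a by auto
  have n: "0 \<le> gfac q y k" for k using gfac_bounds(1)[OF h] .
  have f0: "gfac q y (0) \<le> (721/1000)"
    by (rule gfac_box[OF _ a(1,2) _ _ a(3,4)]) (simp_all add: max_def)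
  have c0: "G q y (Suc 0) \<le> (1::real) * (721/1000)" by (rule G_le_step[OF _ f0 _ n]) simp_all
  have f1: "gfac q y (Suc 0) \<le> (627/1000)"
    by (rule gfac_box[OF _ a(1,2) _ _ a(3,4)]) (simp_all add: max_def)
  have c1: "G q y (Suc (Suc 0)) \<le> (1::real) * (721/1000) * (627/1000)" by (rule G_le_step[OF c0 f1 _ n]) simp
  have f2: "gfac q y (Suc (Suc 0)) \<le> (123/250)"
    by (rule gfac_box[OF _ a(1,2) _ _ a(3,4)]) (simp_all add: max_def)
  have c2: "G q y (Suc (Suc (Suc 0))) \<le> (1::real) * (721/1000) * (627/1000) * (123/250)" by (rule G_le_step[OF c1 f2 _ n]) simp
  have f3: "gfac q y (Suc (Suc (Suc 0))) \<le> (671/1000)"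
    by (rule gfac_box[OF _ a(1,2) _ _ a(3,4)]) (simp_all add: max_def)
  have c3: "G q y (Suc (Suc (Suc (Suc 0)))) \<le> (1::real) * (721/1000) * (627/1000) * (123/250) * (671/1000)" by (rule G_le_step[OF c2 f3 _ n]) simp
  have rb: "min (1/(5) * (1 - (13/20)/(5))) (1/(3/2) * (1 - (13/20)/(3/2))) \<le> 1/y * (1 - q/y)"
    by (rule rhs_box[OF _ a(2) _ a(3,4)]) (use h in auto)
  have num: "(1::real) * (721/1000) * (627/1000) * (123/250) * (671/1000) < min (1/(5) * (1 - (13/20)/(5))) (1/(3/2) * (1 - (13/20)/(3/2)))" by (simp add: min_def)
  have "G q y (Suc (Suc (Suc (Suc 0)))) < 1/y * (1 - q/y)" using c3 rb num by linarith
  then show ?thesis by blast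
qed

lemma qint8:
  fixes q y :: real
  assumes a: "(3/5) \<le> q" "q \<le> (13/20)" "1 < q * y" "y \<le> 5"
  shows "\<exists>N. G q y N < 1/y * (1 - q/y)"
proof -
  have yl: "(3/2) \<le> y" by (rule ylow[OF _ a(2) _ a(3)]) (use a in auto)
  show ?thesis by (rule box14[OF a(1,2) yl a(4)])
qed

lemma box15:
  fixes q y :: real
  assumes a: "(13/20) \<le> q" "q \<le> (7/10)" "(7/5) \<le> y" "y \<le> (5)"
  shows "\<exists>N. G q y N < 1/y * (1 - q/y)"
proof -
  have h: "0 < q" "q < 1" "1 \<le> y" "y \<le> 5" using a by auto
  have n: "0 \<le> gfac q y k" for k using gfac_bounds(1)[OF h] .
  have f0: "gfac q y (0) \<le> (701/1000)"
    by (rule gfac_box[OF _ a(1,2) _ _ a(3,4)]) (simp_all add: max_def)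
  have c0: "G q y (Suc 0) \<le> (1::real) * (701/1000)" by (rule G_le_step[OF _ f0 _ n]) simp_all
  have f1: "gfac q y (Suc 0) \<le> (729/1000)"
    by (rule gfac_box[OF _ a(1,2) _ _ a(3,4)]) (simp_all add: max_def)
  have c1: "G q y (Suc (Suc 0)) \<le> (1::real) * (701/1000) * (729/1000)" by (rule G_le_step[OF c0 f1 _ n]) simp
  have f2: "gfac q y (Suc (Suc 0)) \<le> (19/40)"
    by (rule gfac_box[OF _ a(1,2) _ _ a(3,4)]) (simp_all add: max_def)
  have c2: "G q y (Suc (Suc (Suc 0))) \<le> (1::real) * (701/1000) * (729/1000) * (19/40)" by (rule G_le_step[OF c1 f2 _ n]) simp
  have f3: "gfac q y (Suc (Suc (Suc 0))) \<le> (583/1000)"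
    by (rule gfac_box[OF _ a(1,2) _ _ a(3,4)]) (simp_all add: max_def)
  have c3: "G q y (Suc (Suc (Suc (Suc 0)))) \<le> (1::real) * (701/1000) * (729/1000) * (19/40) * (583/1000)" by (rule G_le_step[OF c2 f3 _ n]) simp
  have rb: "min (1/(5) * (1 - (7/10)/(5))) (1/(7/5) * (1 - (7/10)/(7/5))) \<le> 1/y * (1 - q/y)"
    by (rule rhs_box[OF _ a(2) _ a(3,4)]) (use h in auto)
  have num: "(1::real) * (701/1000) * (729/1000) * (19/40) * (583/1000) < min (1/(5) * (1 - (7/10)/(5))) (1/(7/5) * (1 - (7/10)/(7/5)))" by (simp add: min_def)
  have "G q y (Suc (Suc (Suc (Suc 0)))) < 1/y * (1 - q/y)" using c3 rb num by linarith
  then show ?thesis by blast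
qed

lemma qint9:
  fixes q y :: real
  assumes a: "(13/20) \<le> q" "q \<le> (7/10)" "1 < q * y" "y \<le> 5"
  shows "\<exists>N. G q y N < 1/y * (1 - q/y)"
proof -
  have yl: "(7/5) \<le> y" by (rule ylow[OF _ a(2) _ a(3)]) (use a in auto)
  show ?thesis by (rule box15[OF a(1,2) yl a(4)])
qed

lemma box16:
  fixes q y :: real
  assumes a: "(7/10) \<le> q" "q \<le> (3/4)" "(13/10) \<le> y" "y \<le> (5)"
  shows "\<exists>N. G q y N < 1/y * (1 - q/y)"
proof -
  have h: "0 < q" "q < 1" "1 \<le> y" "y \<le> 5" using a by auto
  have n: "0 \<le> gfac q y k" for k using gfac_bounds(1)[OF h] .
  have f0: "gfac q y (0) \<le> (661/1000)"
    by (rule gfac_box[OF _ a(1,2) _ _ a(3,4)]) (simp_all add: max_def)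
  have c0: "G q y (Suc 0) \<le> (1::real) * (661/1000)" by (rule G_le_step[OF _ f0 _ n]) simp_all
  have f1: "gfac q y (Suc 0) \<le> (159/200)"
    by (rule gfac_box[OF _ a(1,2) _ _ a(3,4)]) (simp_all add: max_def)
  have c1: "G q y (Suc (Suc 0)) \<le> (1::real) * (661/1000) * (159/200)" by (rule G_le_step[OF c0 f1 _ n]) simp
  have f2: "gfac q y (Suc (Suc 0)) \<le> (329/500)"
    by (rule gfac_box[OF _ a(1,2) _ _ a(3,4)]) (simp_all add: max_def)
  have c2: "G q y (Suc (Suc (Suc 0))) \<le> (1::real) * (661/1000) * (159/200) * (329/500)" by (rule G_le_step[OF c1 f2 _ n]) simp
  have f3: "gfac q y (Suc (Suc (Suc 0))) \<le> (487/1000)"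
    by (rule gfac_box[OF _ a(1,2) _ _ a(3,4)]) (simp_all add: max_def)
  have c3: "G q y (Suc (Suc (Suc (Suc 0)))) \<le> (1::real) * (661/1000) * (159/200) * (329/500) * (487/1000)" by (rule G_le_step[OF c2 f3 _ n]) simp
  have rb: "min (1/(5) * (1 - (3/4)/(5))) (1/(13/10) * (1 - (3/4)/(13/10))) \<le> 1/y * (1 - q/y)"
    by (rule rhs_box[OF _ a(2) _ a(3,4)]) (use h in auto)
  have num: "(1::real) * (661/1000) * (159/200) * (329/500) * (487/1000) < min (1/(5) * (1 - (3/4)/(5))) (1/(13/10) * (1 - (3/4)/(13/10)))" by (simp add: min_def)
  have "G q y (Suc (Suc (Suc (Suc 0)))) < 1/y * (1 - q/y)" using c3 rb num by linarith
  then show ?thesis by blast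
qed

lemma qint10:
  fixes q y :: real
  assumes a: "(7/10) \<le> q" "q \<le> (3/4)" "1 < q * y" "y \<le> 5"
  shows "\<exists>N. G q y N < 1/y * (1 - q/y)"
proof -
  have yl: "(13/10) \<le> y" by (rule ylow[OF _ a(2) _ a(3)]) (use a in auto)
  show ?thesis by (rule box16[OF a(1,2) yl a(4)])
qed

lemma box17:
  fixes q y :: real
  assumes a: "(3/4) \<le> q" "q \<le> (4/5)" "(6/5) \<le> y" "y \<le> (5)"
  shows "\<exists>N. G q y N < 1/y * (1 - q/y)"
proof -
  have h: "0 < q" "q < 1" "1 \<le> y" "y \<le> 5" using a by auto
  have n: "0 \<le> gfac q y k" for k using gfac_bounds(1)[OF h] .
  have f0: "gfac q y (0) \<le> (601/1000)"
    by (rule gfac_box[OF _ a(1,2) _ _ a(3,4)]) (simp_all add: max_def)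
  have c0: "G q y (Suc 0) \<le> (1::real) * (601/1000)" by (rule G_le_step[OF _ f0 _ n]) simp_all
  have f1: "gfac q y (Suc 0) \<le> (819/1000)"
    by (rule gfac_box[OF _ a(1,2) _ _ a(3,4)]) (simp_all add: max_def)
  have c1: "G q y (Suc (Suc 0)) \<le> (1::real) * (601/1000) * (819/1000)" by (rule G_le_step[OF c0 f1 _ n]) simp
  have f2: "gfac q y (Suc (Suc 0)) \<le> (801/1000)"
    by (rule gfac_box[OF _ a(1,2) _ _ a(3,4)]) (simp_all add: max_def)
  have c2: "G q y (Suc (Suc (Suc 0))) \<le> (1::real) * (601/1000) * (819/1000) * (801/1000)" by (rule G_le_step[OF c1 f2 _ n]) simp
  have f3: "gfac q y (Suc (Suc (Suc 0))) \<le> (82/125)"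
    by (rule gfac_box[OF _ a(1,2) _ _ a(3,4)]) (simp_all add: max_def)
  have c3: "G q y (Suc (Suc (Suc (Suc 0)))) \<le> (1::real) * (601/1000) * (819/1000) * (801/1000) * (82/125)" by (rule G_le_step[OF c2 f3 _ n]) simp
  have f4: "gfac q y (Suc (Suc (Suc (Suc 0)))) \<le> (511/1000)"
    by (rule gfac_box[OF _ a(1,2) _ _ a(3,4)]) (simp_all add: max_def)
  have c4: "G q y (Suc (Suc (Suc (Suc (Suc 0))))) \<le> (1::real) * (601/1000) * (819/1000) * (801/1000) * (82/125) * (511/1000)" by (rule G_le_step[OF c3 f4 _ n]) simp
  have rb: "min (1/(5) * (1 - (4/5)/(5))) (1/(6/5) * (1 - (4/5)/(6/5))) \<le> 1/y * (1 - q/y)"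
    by (rule rhs_box[OF _ a(2) _ a(3,4)]) (use h in auto)
  have num: "(1::real) * (601/1000) * (819/1000) * (801/1000) * (82/125) * (511/1000) < min (1/(5) * (1 - (4/5)/(5))) (1/(6/5) * (1 - (4/5)/(6/5)))" by (simp add: min_def)
  have "G q y (Suc (Suc (Suc (Suc (Suc 0))))) < 1/y * (1 - q/y)" using c4 rb num by linarith
  then show ?thesis by blast
qed

lemma qint11:
  fixes q y :: real
  assumes a: "(3/4) \<le> q" "q \<le> (4/5)" "1 < q * y" "y \<le> 5"
  shows "\<exists>N. G q y N < 1/y * (1 - q/y)"
proof -
  have yl: "(6/5) \<le> y" by (rule ylow[OF _ a(2) _ a(3)]) (use a in auto)
  show ?thesis by (rule box17[OF a(1,2) yl a(4)])
qed

lemma box18: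
  fixes q y :: real
  assumes a: "(4/5) \<le> q" "q \<le> (17/20)" "(11/10) \<le> y" "y \<le> (5)"
  shows "\<exists>N. G q y N < 1/y * (1 - q/y)"
proof -
  have h: "0 < q" "q < 1" "1 \<le> y" "y \<le> 5" using a by auto
  have n: "0 \<le> gfac q y k" for k using gfac_bounds(1)[OF h] .
  have f0: "gfac q y (0) \<le> (521/1000)"
    by (rule gfac_box[OF _ a(1,2) _ _ a(3,4)]) (simp_all add: max_def)
  have c0: "G q y (Suc 0) \<le> (1::real) * (521/1000)" by (rule G_le_step[OF _ f0 _ n]) simp_all
  have f1: "gfac q y (Suc 0) \<le> (791/1000)"
    by (rule gfac_box[OF _ a(1,2) _ _ a(3,4)]) (simp_all add: max_def)
  have c1: "G q y (Suc (Suc 0)) \<le> (1::real) * (521/1000) * (791/1000)" by (rule G_le_step[OF c0 f1 _ n]) simp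
  have f2: "gfac q y (Suc (Suc 0)) \<le> (441/500)"
    by (rule gfac_box[OF _ a(1,2) _ _ a(3,4)]) (simp_all add: max_def)
  have c2: "G q y (Suc (Suc (Suc 0))) \<le> (1::real) * (521/1000) * (791/1000) * (441/500)" by (rule G_le_step[OF c1 f2 _ n]) simp
  have f3: "gfac q y (Suc (Suc (Suc 0))) \<le> (427/500)"
    by (rule gfac_box[OF _ a(1,2) _ _ a(3,4)]) (simp_all add: max_def)
  have c3: "G q y (Suc (Suc (Suc (Suc 0)))) \<le> (1::real) * (521/1000) * (791/1000) * (441/500) * (427/500)" by (rule G_le_step[OF c2 f3 _ n]) simp
  have f4: "gfac q y (Suc (Suc (Suc (Suc 0)))) \<le> (753/1000)"
    by (rule gfac_box[OF _ a(1,2) _ _ a(3,4)]) (simp_all add: max_def)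
  have c4: "G q y (Suc (Suc (Suc (Suc (Suc 0))))) \<le> (1::real) * (521/1000) * (791/1000) * (441/500) * (427/500) * (753/1000)" by (rule G_le_step[OF c3 f4 _ n]) simp
  have f5: "gfac q y (Suc (Suc (Suc (Suc (Suc 0))))) \<le> (611/1000)"
    by (rule gfac_box[OF _ a(1,2) _ _ a(3,4)]) (simp_all add: max_def)
  have c5: "G q y (Suc (Suc (Suc (Suc (Suc (Suc 0)))))) \<le> (1::real) * (521/1000) * (791/1000) * (441/500) * (427/500) * (753/1000) * (611/1000)" by (rule G_le_step[OF c4 f5 _ n]) simp
  have rb: "min (1/(5) * (1 - (17/20)/(5))) (1/(11/10) * (1 - (17/20)/(11/10))) \<le> 1/y * (1 - q/y)"
    by (rule rhs_box[OF _ a(2) _ a(3,4)]) (use h in auto)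
  have num: "(1::real) * (521/1000) * (791/1000) * (441/500) * (427/500) * (753/1000) * (611/1000) < min (1/(5) * (1 - (17/20)/(5))) (1/(11/10) * (1 - (17/20)/(11/10)))" by (simp add: min_def)
  have "G q y (Suc (Suc (Suc (Suc (Suc (Suc 0)))))) < 1/y * (1 - q/y)" using c5 rb num by linarith
  then show ?thesis by blast
qed

lemma qint12:
  fixes q y :: real
  assumes a: "(4/5) \<le> q" "q \<le> (17/20)" "1 < q * y" "y \<le> 5"
  shows "\<exists>N. G q y N < 1/y * (1 - q/y)"
proof -
  have yl: "(11/10) \<le> y" by (rule ylow[OF _ a(2) _ a(3)]) (use a in auto)
  show ?thesis by (rule box18[OF a(1,2) yl a(4)])
qed

lemma box19:
  fixes q y :: real
  assumes a: "(17/20) \<le> q" "q \<le> (9/10)" "(11/10) \<le> y" "y \<le> (5)"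
  shows "\<exists>N. G q y N < 1/y * (1 - q/y)"
proof -
  have h: "0 < q" "q < 1" "1 \<le> y" "y \<le> 5" using a by auto
  have n: "0 \<le> gfac q y k" for k using gfac_bounds(1)[OF h] .
  have f0: "gfac q y (0) \<le> (421/1000)"
    by (rule gfac_box[OF _ a(1,2) _ _ a(3,4)]) (simp_all add: max_def)
  have c0: "G q y (Suc 0) \<le> (1::real) * (421/1000)" by (rule G_le_step[OF _ f0 _ n]) simp_all
  have f1: "gfac q y (Suc 0) \<le> (703/1000)"
    by (rule gfac_box[OF _ a(1,2) _ _ a(3,4)]) (simp_all add: max_def)
  have c1: "G q y (Suc (Suc 0)) \<le> (1::real) * (421/1000) * (703/1000)" by (rule G_le_step[OF c0 f1 _ n]) simp
  have f2: "gfac q y (Suc (Suc 0)) \<le> (437/500)"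
    by (rule gfac_box[OF _ a(1,2) _ _ a(3,4)]) (simp_all add: max_def)
  have c2: "G q y (Suc (Suc (Suc 0))) \<le> (1::real) * (421/1000) * (703/1000) * (437/500)" by (rule G_le_step[OF c1 f2 _ n]) simp
  have f3: "gfac q y (Suc (Suc (Suc 0))) \<le> (957/1000)"
    by (rule gfac_box[OF _ a(1,2) _ _ a(3,4)]) (simp_all add: max_def)
  have c3: "G q y (Suc (Suc (Suc (Suc 0)))) \<le> (1::real) * (421/1000) * (703/1000) * (437/500) * (957/1000)" by (rule G_le_step[OF c2 f3 _ n]) simp
  have f4: "gfac q y (Suc (Suc (Suc (Suc 0)))) \<le> (973/1000)"
    by (rule gfac_box[OF _ a(1,2) _ _ a(3,4)]) (simp_all add: max_def)
  have c4: "G q y (Suc (Suc (Suc (Suc (Suc 0))))) \<le> (1::real) * (421/1000) * (703/1000) * (437/500) * (957/1000) * (973/1000)" by (rule G_le_step[OF c3 f4 _ n]) simp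
  have f5: "gfac q y (Suc (Suc (Suc (Suc (Suc 0))))) \<le> (941/1000)"
    by (rule gfac_box[OF _ a(1,2) _ _ a(3,4)]) (simp_all add: max_def)
  have c5: "G q y (Suc (Suc (Suc (Suc (Suc (Suc 0)))))) \<le> (1::real) * (421/1000) * (703/1000) * (437/500) * (957/1000) * (973/1000) * (941/1000)" by (rule G_le_step[OF c4 f5 _ n]) simp
  have f6: "gfac q y (Suc (Suc (Suc (Suc (Suc (Suc 0)))))) \<le> (7/8)"
    by (rule gfac_box[OF _ a(1,2) _ _ a(3,4)]) (simp_all add: max_def)
  have c6: "G q y (Suc (Suc (Suc (Suc (Suc (Suc (Suc 0))))))) \<le> (1::real) * (421/1000) * (703/1000) * (437/500) * (957/1000) * (973/1000) * (941/1000) * (7/8)" by (rule G_le_step[OF c5 f6 _ n]) simp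
  have f7: "gfac q y (Suc (Suc (Suc (Suc (Suc (Suc (Suc 0))))))) \<le> (157/200)"
    by (rule gfac_box[OF _ a(1,2) _ _ a(3,4)]) (simp_all add: max_def)
  have c7: "G q y (Suc (Suc (Suc (Suc (Suc (Suc (Suc (Suc 0)))))))) \<le> (1::real) * (421/1000) * (703/1000) * (437/500) * (957/1000) * (973/1000) * (941/1000) * (7/8) * (157/200)" by (rule G_le_step[OF c6 f7 _ n]) simp
  have rb: "min (1/(5) * (1 - (9/10)/(5))) (1/(11/10) * (1 - (9/10)/(11/10))) \<le> 1/y * (1 - q/y)"
    by (rule rhs_box[OF _ a(2) _ a(3,4)]) (use h in auto)
  have num: "(1::real) * (421/1000) * (703/1000) * (437/500) * (957/1000) * (973/1000) * (941/1000) * (7/8) * (157/200) < min (1/(5) * (1 - (9/10)/(5))) (1/(11/10) * (1 - (9/10)/(11/10)))" by (simp add: min_def)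
  have "G q y (Suc (Suc (Suc (Suc (Suc (Suc (Suc (Suc 0)))))))) < 1/y * (1 - q/y)" using c7 rb num by linarith
  then show ?thesis by blast
qed

lemma qint13:
  fixes q y :: real
  assumes a: "(17/20) \<le> q" "q \<le> (9/10)" "1 < q * y" "y \<le> 5"
  shows "\<exists>N. G q y N < 1/y * (1 - q/y)"
proof -
  have yl: "(11/10) \<le> y" by (rule ylow[OF _ a(2) _ a(3)]) (use a in auto)
  show ?thesis by (rule box19[OF a(1,2) yl a(4)])
qed

lemma cover_mid:
  fixes q y :: real
  assumes a: "1/5 \<le> q" "q \<le> 9/10" "1 < q * y" "y \<le> 5"
  shows "\<exists>N. G q y N < 1/y * (1 - q/y)"
proof -
  have "q \<le> (1/4) \<or> ((1/4) \<le> q \<and> q \<le> (3/10)) \<or> ((3/10) \<le> q \<and> q \<le> (7/20)) \<or> ((7/20) \<le> q \<and> q \<le> (2/5)) \<or> ((2/5) \<le> q \<and> q \<le> (9/20)) \<or> ((9/20) \<le> q \<and> q \<le> (1/2)) \<or> ((1/2) \<le> q \<and> q \<le> (11/20)) \<or> ((11/20) \<le> q \<and> q \<le> (3/5)) \<or> ((3/5) \<le> q \<and> q \<le> (13/20)) \<or> ((13/20) \<le> q \<and> q \<le> (7/10)) \<or> ((7/10) \<le> q \<and> q \<le> (3/4)) \<or> ((3/4) \<le> q \<and> q \<le> (4/5)) \<or> ((4/5) \<le> q \<and> q \<le> (17/20)) \<or> (17/20) \<le> q" by linarith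
  then show ?thesis
  proof (elim disjE conjE)
    assume c: "q \<le> (1/4)"
    show ?thesis by (rule qint0[OF a(1) c a(3,4)])
  next
    assume c: "(1/4) \<le> q" "q \<le> (3/10)"
    show ?thesis by (rule qint1[OF c a(3,4)])
  next
    assume c: "(3/10) \<le> q" "q \<le> (7/20)"
    show ?thesis by (rule qint2[OF c a(3,4)])
  next
    assume c: "(7/20) \<le> q" "q \<le> (2/5)"
    show ?thesis by (rule qint3[OF c a(3,4)])
  next
    assume c: "(2/5) \<le> q" "q \<le> (9/20)"
    show ?thesis by (rule qint4[OF c a(3,4)])
  next
    assume c: "(9/20) \<le> q" "q \<le> (1/2)"
    show ?thesis by (rule qint5[OF c a(3,4)])
  next
    assume c: "(1/2) \<le> q" "q \<le> (11/20)"
    show ?thesis by (rule qint6[OF c a(3,4)])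
  next
    assume c: "(11/20) \<le> q" "q \<le> (3/5)"
    show ?thesis by (rule qint7[OF c a(3,4)])
  next
    assume c: "(3/5) \<le> q" "q \<le> (13/20)"
    show ?thesis by (rule qint8[OF c a(3,4)])
  next
    assume c: "(13/20) \<le> q" "q \<le> (7/10)"
    show ?thesis by (rule qint9[OF c a(3,4)])
  next
    assume c: "(7/10) \<le> q" "q \<le> (3/4)"
    show ?thesis by (rule qint10[OF c a(3,4)])
  next
    assume c: "(3/4) \<le> q" "q \<le> (4/5)"
    show ?thesis by (rule qint11[OF c a(3,4)])
  next
    assume c: "(4/5) \<le> q" "q \<le> (17/20)"
    show ?thesis by (rule qint12[OF c a(3,4)])
  next
    assume c: "(17/20) \<le> q"
    show ?thesis by (rule qint13[OF c a(2,3,4)])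
  qed
qed


lemma pow45: "15 \<le> n \<Longrightarrow> (real n + 1) * (4/5)^n < 4/5"
proof (induction n rule: dec_induct)
  case base then show ?case by (simp add: power_divide)
next
  case (step n)
  have "(real (Suc n) + 1) * (4/5)^(Suc n) = (real n + 2) * (4/5) * (4/5)^n" by simp
  also have "\<dots> \<le> (real n + 1) * (4/5)^n"
    using step(1) by (intro mult_right_mono) auto
  also have "\<dots> < 4/5" by (rule step.IH)
  finally show ?case .
qed

lemma G_le_pow:
  fixes q y :: real
  assumes h: "0 < q" "q < 1" "1 \<le> y" "y \<le> 5"
  shows "1/5 \<le> q ^ n \<Longrightarrow> G q y n \<le> (4/5)^n"
proof (induction n)
  case 0 then show ?case by simp
next
  case (Suc n)
  have "q ^ Suc n \<le> q ^ n" using h by (simp add: power_decreasing)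
  then have "1/5 \<le> q ^ n" using Suc.prems by linarith
  then have IH: "G q y n \<le> (4/5)^n" by (rule Suc.IH)
  have g: "gfac q y n \<le> 4/5" by (rule gfac_bounds(3)[OF h Suc.prems])
  have "G q y (Suc n) \<le> (4/5)^n * (4/5)"
    by (rule G_le_step[OF IH g _ gfac_bounds(1)[OF h]]) simp
  then show ?case by (simp add: mult.commute)
qed

lemma asym:
  fixes q y :: real
  assumes a: "9/10 \<le> q" "q < 1" "1 < q * y" "y \<le> 5"
  shows "\<exists>N. G q y N < 1/y * (1 - q/y)"
proof -
  have q0: "0 < q" using a by simp
  have y0: "0 < y" using a(3) q0 by (smt (verit) mult_nonneg_nonpos)
  have y1: "1 \<le> y"
  proof -
    have "q * y \<le> 1 * y" using a y0 by (intro mult_right_mono) auto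
    then show ?thesis using a by simp
  qed
  have h: "0 < q" "q < 1" "1 \<le> y" "y \<le> 5" using q0 a y1 by auto
  have "\<exists>m. q ^ m < 1/5" by (rule real_arch_pow_inv) (use a in auto)
  then have ex: "\<exists>m. q ^ m < 1/5" .
  define m where "m = (LEAST m. q ^ m < 1/5)"
  have m1: "q ^ m < 1/5" unfolding m_def by (rule LeastI_ex[OF ex])
  have m2: "\<not> q ^ k < 1/5" if "k < m" for k using not_less_Least[OF that[unfolded m_def]] m_def by simp
  have "m \<noteq> 0" using m1 by (cases "m = 0") auto
  then obtain n where mn: "m = Suc n" by (cases m) auto
  have qn: "1/5 \<le> q ^ n" using m2[of n] mn by simp
  have qsn: "q ^ Suc n < 1/5" using m1 mn by simp
  have n15: "15 \<le> n"
  proof (rule ccontr)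
    assume "\<not> 15 \<le> n"
    then have "Suc n \<le> 15" by simp
    then have "q ^ 15 \<le> q ^ Suc n" using h by (intro power_decreasing) auto
    moreover have "(9/10::real) ^ 15 \<le> q ^ 15" using a by (intro power_mono) auto
    moreover have "(1/5::real) \<le> (9/10) ^ 15" by (simp add: power_divide)
    ultimately show False using qsn by linarith
  qed
  have bern: "1 + real (Suc n) * (q - 1) \<le> q ^ Suc n"
    using Bernoulli_inequality[of "q - 1" "Suc n"] a by simp
  have nq: "4/5 < real (n+1) * (1 - q)" using bern qsn by (simp add: algebra_simps)
  have Gb: "G q y n \<le> (4/5)^n" by (rule G_le_pow[OF h qn])
  have p1: "(real n + 1) * (4/5)^n < 4/5" by (rule pow45[OF n15])
  have p2: "(4/5::real)^n < 1 - q"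
  proof -
    have nq': "4/5 < (real n + 1) * (1 - q)" using nq by (simp add: add.commute)
    have "(real n + 1) * (4/5)^n < (real n + 1) * (1 - q)" using p1 nq' by linarith
    moreover have "0 < real n + 1" by simp
    ultimately show ?thesis by (rule mult_less_cancel_left_pos[THEN iffD1, rotated])
  qed
  have p3: "(4/5::real)^n \<le> (4/5)^15" using n15 by (intro power_decreasing) auto
  have yq: "1/q \<le> y" using a q0 by (simp add: field_simps)
  have rb: "min (1/5 * (1 - q/5)) (1/(1/q) * (1 - q/(1/q))) \<le> 1/y * (1 - q/y)"
    by (rule rhs_box[OF _ order_refl _ yq a(4)]) (use q0 a in \<open>auto simp: field_simps\<close>)
  have r1: "(4/5::real)^15 < 1/5 * (1 - q/5)" using a by (simp add: power_divide)
  have r2: "1 - q \<le> 1/(1/q) * (1 - q/(1/q))"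
  proof -
    have "1/(1/q) * (1 - q/(1/q)) = (q * (1 + q)) * (1 - q)" by (simp add: algebra_simps power2_eq_square)
    moreover have "1 \<le> q * (1 + q)"
    proof -
      have "(9/10) * (1 + 9/10) \<le> q * (1 + q)" using a by (intro mult_mono) auto
      then show ?thesis by simp
    qed
    ultimately show ?thesis using a by (simp add: mult_right_mono)
  qed
  have gA: "G q y n < 1/5 * (1 - q/5)" using Gb p3 r1 by linarith
  have gB: "G q y n < 1/(1/q) * (1 - q/(1/q))" using Gb p2 r2 by linarith
  have "G q y n < min (1/5 * (1 - q/5)) (1/(1/q) * (1 - q/(1/q)))" using gA gB by simp
  then have "G q y n < 1/y * (1 - q/y)" using rb by linarith
  then show ?thesis by blast
qed

theorem proposition1:
  fixes q x :: real
  assumes "0 < q" and "q < 1" and "x \<ge> -5"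
  shows "theta q x \<noteq> 0"
proof (cases "0 \<le> x")
  case True
  then show ?thesis using theta_ge_1[OF assms(1,2) True] by simp
next
  case False
  define y where "y = -x"
  have y: "0 < y" "y \<le> 5" and xy: "x = -y" using False assms(3) by (auto simp: y_def)
  have q: "0 < q" "q < 1" using assms by auto
  show ?thesis
  proof (cases "q * y \<le> 1")
    case True
    have t: "theta q (-y) \<ge> 1 - q * y + q^3 * y^2 - q^6 * y^3"
      by (rule theta_alt(2)[OF q _ True]) (use y in simp)
    have "q ^ 3 * y \<le> q ^ 2 * (q * y)" by (simp add: power_def algebra_simps eval_nat_numeral)
    also have "\<dots> \<le> q ^ 2 * 1" using True q by (intro mult_left_mono) auto
    also have "\<dots> < 1" using q by (simp add: power_less_one_iff)
    finally have a: "q ^ 3 * y < 1" by simp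
    have b: "0 < q ^ 3 * y ^ 2" using q y by simp
    have "q^3 * y^2 - q^6 * y^3 = (q^3 * y^2) * (1 - q^3 * y)" by (simp add: algebra_simps eval_nat_numeral)
    also have "\<dots> > 0" using a b by simp
    finally have "0 < 1 - q * y + q^3 * y^2 - q^6 * y^3" using True by linarith
    then show ?thesis using t xy by simp
  next
    case False
    then have qy: "1 < q * y" by simp
    have y1: "1 \<le> y"
    proof -
      have "q * y \<le> 1 * y" using q y by (intro mult_right_mono) auto
      then show ?thesis using qy by simp
    qed
    have q5: "1/5 \<le> q"
    proof -
      have "q * y \<le> q * 5" using q y by (intro mult_left_mono) auto
      then show ?thesis using qy by simp
    qed
    obtain N where GN: "G q y N < 1/y * (1 - q/y)"
    proof (cases "q \<le> 9/10")
      case True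
      then show ?thesis using cover_mid[OF q5 True qy y(2)] that by blast
    next
      case False
      then show ?thesis using asym[of q y] q qy y that by fastforce
    qed
    have kb: "\<bar>theta q (-y) - theta q (-(1/y)) / y\<bar> \<le> G q y N" by (rule key_bound[OF q y1 y(2)])
    have t1: "theta q (-(1/y)) \<ge> 1 - q * (1/y)"
    proof (rule theta_alt(1)[OF q])
      show "0 \<le> 1/y" using y by simp
      show "q * (1/y) \<le> 1" using q y1 by (simp add: field_simps)
    qed
    have "(1 - q/y) / y \<le> theta q (-(1/y)) / y"
      using t1 y by (intro divide_right_mono) auto
    then have "1/y * (1 - q/y) \<le> theta q (-(1/y)) / y" by simp
    then have "0 < theta q (-y)" using kb GN by linarith
    then show ?thesis using xy by simp
  qed
qed

end
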